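(* Consider a prior of type (T1) whose density $g$ is positive and continuous on $\mathbb R$, and let $\theta_0\in\ell_2$. Fix $K>0$. There is a small enough constant $\epsilon>0$ such that, uniformly for $k\in\{2,\dots,\lfloor\epsilon n/\log n\rfloor\}$, $$\epsilon_n(k)^2\asymp\sum_{i=k+1}^\infty\theta_{0,i}^2+\frac{k\log n}{n}.$$ Moreover, if $\theta_0\in\mathcal H_\infty(\beta,L)\cup\mathcal S_\beta(L)$ with $\beta>0$ and $L>0$, then, with $\Lambda_n=\{2,\dots,\lfloor\epsilon n/\log n\rfloor\}$, $$\epsilon_{n,0}\lesssim(n/\log n)^{-\beta/(2\beta+1)},$$ and there exists $\theta_0\in\mathcal H_\infty(\beta,L)\cup\mathcal S_\beta(L)$ for which this bound is also a lower bound, i.e. $\epsilon_{n,0}\asymp(n/\log n)^{-\beta/(2\beta+1)}$.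
   Context: Parameters are sequences $\theta=(\theta_j)_{j\ge1}\in\ell_2$ with norm $\|\theta\|_2=(\sum_j\theta_j^2)^{1/2}$. Prior (T1): the hyper-parameter is the truncation level $\lambda=k\in\{2,3,\dots\}$; given $k$, $\theta_j$, $j\le k$, are i.i.d. with Lebesgue density $g$, and $\theta_j=0$ for $j>k$; $g$ satisfies $\int e^{s_0|x|^{p^*}}g(x)dx<\infty$ for some $s_0>0$, $p^*\ge1$. For fixed $K>0$ and true $\theta_0$, $\epsilon_n(k)$ is defined by $\Pi(\theta:\|\theta-\theta_0\|_2\le K\epsilon_n(k)\,|\,k)=e^{-n\epsilon_n(k)^2}$. For a set $\Lambda_n$ of hyper-parameters and a sequence $m_n\to\infty$ (growing slowly), $\epsilon_{n,0}^2=\inf\{\epsilon_n(k)^2:k\in\Lambda_n,\epsilon_n(k)^2\ge m_n\log n/n\}\vee(m_n\log n/n)$. Classes: $\mathcal H_\infty(\beta,L)=\{\theta_0:\max_ii^{2\beta+1}\theta_{0,i}^2\le L\}$ and $\mathcal S_\beta(L)=\{\theta_0:\sum_ii^{2\beta}\theta_{0,i}^2\le L\}$. $a_n\asymp b_n$ means $a_n\lesssim b_n\lesssim a_n$, with constants independent of $n$ and $k$. *)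

theory Defs
  imports "HOL-Probability.Probability"
begin

text \<open>Sequences theta = (theta_1, theta_2, ...) are represented 0-based:
  the Isabelle function value th j stands for theta_(j+1).\<close>

definition l2seq :: "(nat \<Rightarrow> real) set" where
  "l2seq = {th. summable (\<lambda>j. (th j)\<^sup>2)}"

definition tail_sq :: "(nat \<Rightarrow> real) \<Rightarrow> nat \<Rightarrow> real" where
  "tail_sq th k = (\<Sum>j. (th (j + k))\<^sup>2)"

text \<open>Prior (T1) conditionally on the truncation level k: the first k coordinates are
  i.i.d. with Lebesgue density g, the remaining ones are 0.  Hence
  Pi(||theta - theta0||_2 <= r | k) is the g^k-probability that
  sum_{j<=k} (theta_j - theta0_j)^2 + sum_{j>k} theta0_j^2 <= r^2.\<close>
definition prior_ball :: "(real \<Rightarrow> real) \<Rightarrow> (nat \<Rightarrow> real) \<Rightarrow> nat \<Rightarrow> real \<Rightarrow> real" where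
  "prior_ball g th0 k r =
     measure (PiM {..<k} (\<lambda>_. density lborel (\<lambda>x. ennreal (g x))))
       {x \<in> space (PiM {..<k} (\<lambda>_. density lborel (\<lambda>x. ennreal (g x)))).
          (\<Sum>j<k. (x j - th0 j)\<^sup>2) + tail_sq th0 k \<le> r\<^sup>2}"

definition eps_n :: "(real \<Rightarrow> real) \<Rightarrow> (nat \<Rightarrow> real) \<Rightarrow> real \<Rightarrow> nat \<Rightarrow> nat \<Rightarrow> real" where
  "eps_n g th0 K n k =
     (THE e. e > 0 \<and> prior_ball g th0 k (K * e) = exp (- (real n * e\<^sup>2)))"

definition Lambda_n :: "real \<Rightarrow> nat \<Rightarrow> nat set" where
  "Lambda_n eps n = {2 .. nat \<lfloor>eps * real n / ln (real n)\<rfloor>}"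

text \<open>epsilon_{n,0}^2 (as an extended real: the infimum of the empty set is +infinity).\<close>
definition eps_n0_sq ::
  "(real \<Rightarrow> real) \<Rightarrow> (nat \<Rightarrow> real) \<Rightarrow> real \<Rightarrow> (nat \<Rightarrow> real) \<Rightarrow> nat set \<Rightarrow> nat \<Rightarrow> ereal" where
  "eps_n0_sq g th0 K m Lam n =
     sup (Inf {ereal ((eps_n g th0 K n k)\<^sup>2) | k. k \<in> Lam \<and>
                 (eps_n g th0 K n k)\<^sup>2 \<ge> m n * ln (real n) / real n})
         (ereal (m n * ln (real n) / real n))"

definition H_inf :: "real \<Rightarrow> real \<Rightarrow> (nat \<Rightarrow> real) set" where
  "H_inf \<beta> L = {th. \<forall>j. real (j + 1) powr (2 * \<beta> + 1) * (th j)\<^sup>2 \<le> L}"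

definition S_cls :: "real \<Rightarrow> real \<Rightarrow> (nat \<Rightarrow> real) set" where
  "S_cls \<beta> L = {th. summable (\<lambda>j. real (j + 1) powr (2 * \<beta>) * (th j)\<^sup>2) \<and>
                     (\<Sum>j. real (j + 1) powr (2 * \<beta>) * (th j)\<^sup>2) \<le> L}"

end

theory Submission
  imports Defs "HOL-Real_Asymp.Real_Asymp"
begin


lemma R1: "((\<lambda>x::real. sqrt (sqrt (ln x / (16 * x))) / exp (- ln x / 16)) \<longlongrightarrow> 0) at_top"
  by real_asymp
lemma R2: "filterlim (\<lambda>x::real. x * sqrt (ln x / x)) at_top at_top"
  by real_asymp
lemma R3: "((\<lambda>x::real. sqrt (ln x / x)) \<longlongrightarrow> 0) at_top"
  by real_asymp
lemma R4: "filterlim (\<lambda>x::real. x / ln x) at_top at_top"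
  by real_asymp
lemma R5: "eventually (\<lambda>x::real. ln x \<le> sqrt x) at_top"
  by real_asymp

lemma ev_nat: "eventually P at_top \<Longrightarrow> eventually (\<lambda>n::nat. P (real n)) sequentially"
  using filterlim_real_sequentially unfolding filterlim_iff by blast

lemma AS1: "A > 0 \<Longrightarrow> eventually (\<lambda>n::nat. A * sqrt (sqrt (ln (real n) / (16 * real n))) \<le> exp (- ln (real n) / 16)) sequentially"
proof -
  assume A: "A > 0"
  have "eventually (\<lambda>x::real. sqrt (sqrt (ln x / (16 * x))) / exp (- ln x / 16) < 1 / A) at_top"
    using R1 A by (intro order_tendstoD) auto
  then have "eventually (\<lambda>x::real. A * sqrt (sqrt (ln x / (16 * x))) \<le> exp (- ln x / 16)) at_top"
  proof (rule eventually_mono)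
    fix x assume "sqrt (sqrt (ln x / (16 * x))) / exp (- ln x / 16) < 1 / A"
    then have "sqrt (sqrt (ln x / (16 * x))) < exp (- ln x / 16) / A" by (simp add: field_simps)
    then show "A * sqrt (sqrt (ln x / (16 * x))) \<le> exp (- ln x / 16)" using A by (simp add: field_simps)
  qed
  then show ?thesis by (rule ev_nat)
qed

lemma AS2: "A > 0 \<Longrightarrow> eventually (\<lambda>n::nat. sqrt (ln (real n) / real n) \<le> A) sequentially"
proof -
  assume A: "A > 0"
  have "eventually (\<lambda>x::real. sqrt (ln x / x) < A) at_top"
    using R3 A by (intro order_tendstoD) auto
  then have "eventually (\<lambda>x::real. sqrt (ln x / x) \<le> A) at_top" by (rule eventually_mono) simp
  then show ?thesis by (rule ev_nat)
qed

lemma AS3: "A > 0 \<Longrightarrow> eventually (\<lambda>n::nat. 1 / real n \<le> A * sqrt (ln (real n) / real n)) sequentially"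
proof -
  assume A: "A > 0"
  have "eventually (\<lambda>x::real. x * sqrt (ln x / x) \<ge> 1 / A \<and> x > 0) at_top"
    using R2 by (intro eventually_conj) (auto simp: filterlim_at_top eventually_gt_at_top)
  then have "eventually (\<lambda>x::real. 1 / x \<le> A * sqrt (ln x / x)) at_top"
  proof (rule eventually_mono)
    fix x assume h: "x * sqrt (ln x / x) \<ge> 1 / A \<and> x > 0"
    then have "1 \<le> A * (x * sqrt (ln x / x))" using A by (simp add: field_simps)
    then show "1 / x \<le> A * sqrt (ln x / x)" using h by (simp add: field_simps)
  qed
  then show ?thesis by (rule ev_nat)
qed

lemma q_inf: "filterlim (\<lambda>n::nat. real n / ln (real n)) at_top sequentially"
  using filterlim_compose[OF R4 filterlim_real_sequentially] by (simp add: o_def)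

lemma ln_sqrt: "eventually (\<lambda>n::nat. ln (real n) \<le> sqrt (real n)) sequentially"
  using R5 by (rule ev_nat)



lemma telesc:
  fixes b x :: real
  assumes b: "b > 0" and x: "x \<ge> 1"
  shows "b * (x + 1) powr (- (b + 1)) \<le> x powr (- b) - (x + 1) powr (- b)"
proof -
  have "\<exists>z. x < z \<and> z < x + 1 \<and> ((x + 1) powr (- b) - x powr (- b) = ((x + 1) - x) * ((- b) * z powr (- b - 1)))"
  proof (rule MVT2)
    show "x < x + 1" by simp
    fix y assume "x \<le> y" "y \<le> x + 1"
    then have "y > 0" using x by simp
    then show "((\<lambda>y. y powr (- b)) has_real_derivative ((- b) * y powr (- b - 1))) (at y)"
      by (rule has_real_derivative_powr)
  qed
  then obtain z where z: "x < z" "z < x + 1" "(x + 1) powr (- b) - x powr (- b) = (- b) * z powr (- b - 1)"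
    by auto
  have "(x + 1) powr (- (b + 1)) \<le> z powr (- (b + 1))"
    using z x b by (intro powr_mono2') auto
  then have "b * (x + 1) powr (- (b + 1)) \<le> b * z powr (- b - 1)" using b by simp
  also have "\<dots> = x powr (- b) - (x + 1) powr (- b)" using z(3) by simp
  finally show ?thesis .
qed

lemma tail_H:
  fixes th :: "nat \<Rightarrow> real"
  assumes b: "\<beta> > 0" and H: "\<And>j. real (j + 1) powr (2 * \<beta> + 1) * (th j)\<^sup>2 \<le> L"
    and s: "summable (\<lambda>j. (th j)\<^sup>2)" and k: "k \<ge> 1"
  shows "tail_sq th k \<le> L / (2 * \<beta>) * real k powr (- (2 * \<beta>))"
proof -
  define f where "f j = real (j + k) powr (- (2 * \<beta>))" for j
  have f0: "f \<longlonglongrightarrow> 0" unfolding f_def using b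
    by (intro tendsto_neg_powr filterlim_compose[OF filterlim_real_sequentially]) (auto intro: filterlim_add_const_nat_at_top)
  have tel: "(\<lambda>j. f j - f (Suc j)) sums (f 0 - 0)" by (rule telescope_sums'[OF f0])
  have pt: "(th (j + k))\<^sup>2 \<le> L / (2 * \<beta>) * (f j - f (Suc j))" for j
  proof -
    have pos: "real (j + k + 1) powr (2 * \<beta> + 1) > 0" by simp
    have "(th (j + k))\<^sup>2 \<le> L * real (j + k + 1) powr (- (2 * \<beta> + 1))"
    proof -
      have "real (j + k + 1) powr (2 * \<beta> + 1) * (th (j + k))\<^sup>2 \<le> L" using H[of "j + k"] by simp
      then have "(th (j + k))\<^sup>2 \<le> L / real (j + k + 1) powr (2 * \<beta> + 1)" using pos by (simp add: field_simps)
      moreover have "real (j + k + 1) powr (- (2 * \<beta> + 1)) = inverse (real (j + k + 1) powr (2 * \<beta> + 1))"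
        by (rule powr_minus)
      ultimately show ?thesis by (simp only: divide_inverse)
    qed
    also have "\<dots> \<le> L / (2 * \<beta>) * (f j - f (Suc j))"
    proof -
      have L0: "L \<ge> 0" using H[of 0] by (smt (verit) mult_nonneg_nonneg powr_ge_zero zero_le_power2)
      have "2 * \<beta> * (real (j + k) + 1) powr (- (2 * \<beta> + 1)) \<le> real (j + k) powr (- (2 * \<beta>)) - (real (j + k) + 1) powr (- (2 * \<beta>))"
        using telesc[of "2 * \<beta>" "real (j + k)"] b k by simp
      then have "2 * \<beta> * real (j + k + 1) powr (- (2 * \<beta> + 1)) \<le> f j - f (Suc j)"
        unfolding f_def by (simp add: add_ac)
      then have "real (j + k + 1) powr (- (2 * \<beta> + 1)) \<le> (f j - f (Suc j)) / (2 * \<beta>)"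
        using b by (simp add: field_simps)
      then have "L * real (j + k + 1) powr (- (2 * \<beta> + 1)) \<le> L * ((f j - f (Suc j)) / (2 * \<beta>))"
        using L0 by (rule mult_left_mono)
      then show ?thesis by simp
    qed
    finally show ?thesis .
  qed
  have s1: "(\<lambda>j. (th (j + k))\<^sup>2) sums tail_sq th k"
    unfolding tail_sq_def using summable_iff_shift[of "\<lambda>j. (th j)\<^sup>2" k] s by (simp add: summable_sums)
  have s2: "(\<lambda>j. L / (2 * \<beta>) * (f j - f (Suc j))) sums (L / (2 * \<beta>) * (f 0 - 0))"
    by (rule sums_mult[OF tel])
  have "tail_sq th k \<le> L / (2 * \<beta>) * (f 0 - 0)" by (rule sums_le[OF pt s1 s2])
  then show ?thesis unfolding f_def by simp
qed

lemma tail_S: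
  fixes th :: "nat \<Rightarrow> real"
  assumes b: "\<beta> > 0" and s: "summable (\<lambda>j. real (j + 1) powr (2 * \<beta>) * (th j)\<^sup>2)"
    and S: "(\<Sum>j. real (j + 1) powr (2 * \<beta>) * (th j)\<^sup>2) \<le> L"
    and s0: "summable (\<lambda>j. (th j)\<^sup>2)" and k: "k \<ge> 1"
  shows "tail_sq th k \<le> L * real k powr (- (2 * \<beta>))"
proof -
  define w where "w j = real (j + 1) powr (2 * \<beta>) * (th j)\<^sup>2" for j
  have w0: "w j \<ge> 0" for j unfolding w_def by simp
  have pt: "(th (j + k))\<^sup>2 \<le> real k powr (- (2 * \<beta>)) * w (j + k)" for j
  proof -
    have "real k powr (2 * \<beta>) \<le> real (j + k + 1) powr (2 * \<beta>)" using b k by (intro powr_mono2) auto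
    then have "real k powr (2 * \<beta>) * (th (j + k))\<^sup>2 \<le> w (j + k)" unfolding w_def
      by (intro mult_right_mono) (auto simp: add_ac)
    moreover have "real k powr (- (2 * \<beta>)) * real k powr (2 * \<beta>) = 1" using k
      by (simp add: powr_minus)
    ultimately show ?thesis
      by (metis (no_types, lifting) mult.assoc mult_cancel_right1 mult_left_mono powr_ge_zero)
  qed
  have s1: "(\<lambda>j. (th (j + k))\<^sup>2) sums tail_sq th k"
    unfolding tail_sq_def using summable_iff_shift[of "\<lambda>j. (th j)\<^sup>2" k] s0 by (simp add: summable_sums)
  have sw: "summable w" using s unfolding w_def by simp
  have swk: "summable (\<lambda>j. w (j + k))" using summable_iff_shift[of w k] sw by simp
  have s2: "(\<lambda>j. real k powr (- (2 * \<beta>)) * w (j + k)) sums (real k powr (- (2 * \<beta>)) * (\<Sum>j. w (j + k)))"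
    by (intro sums_mult summable_sums swk)
  have "tail_sq th k \<le> real k powr (- (2 * \<beta>)) * (\<Sum>j. w (j + k))" by (rule sums_le[OF pt s1 s2])
  also have "(\<Sum>j. w (j + k)) \<le> L"
  proof -
    have "(\<Sum>j. w (j + k)) = (\<Sum>j. w j) - (\<Sum>i<k. w i)" by (rule suminf_minus_initial_segment[OF sw])
    also have "\<dots> \<le> (\<Sum>j. w j)" using w0 by (simp add: sum_nonneg)
    also have "\<dots> \<le> L" using S unfolding w_def .
    finally show ?thesis .
  qed
  then have "real k powr (- (2 * \<beta>)) * (\<Sum>j. w (j + k)) \<le> real k powr (- (2 * \<beta>)) * L"
    by (intro mult_left_mono) auto
  finally show ?thesis by (simp add: mult.commute)
qed



lemma rate_id:
  fixes Q \<beta> :: real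
  assumes "Q > 0" "\<beta> > 0"
  shows "(Q powr (- \<beta> / (2 * \<beta> + 1)))\<^sup>2 = Q powr (1 / (2 * \<beta> + 1) - 1)"
proof -
  have "(Q powr (- \<beta> / (2 * \<beta> + 1)))\<^sup>2 = Q powr (- \<beta> / (2 * \<beta> + 1) + - \<beta> / (2 * \<beta> + 1))"
    by (simp only: power2_eq_square powr_add[symmetric])
  also have "- \<beta> / (2 * \<beta> + 1) + - \<beta> / (2 * \<beta> + 1) = 1 / (2 * \<beta> + 1) - 1"
  proof -
    have D: "2 * \<beta> + 1 \<noteq> 0" using assms by simp
    have "- \<beta> / (2 * \<beta> + 1) + - \<beta> / (2 * \<beta> + 1) = (- 2 * \<beta>) / (2 * \<beta> + 1)"
      by (simp add: add_divide_distrib[symmetric])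
    also have "\<dots> = (1 - (2 * \<beta> + 1)) / (2 * \<beta> + 1)" by simp
    also have "\<dots> = 1 / (2 * \<beta> + 1) - 1" by (subst diff_divide_distrib) (simp only: divide_self[OF D])
    finally show ?thesis .
  qed
  finally show ?thesis .
qed

lemma rate_split:
  fixes Q x :: real and \<beta> :: real
  assumes Q: "Q > 0" and b: "\<beta> > 0" and x: "x = Q powr (1 / (2 * \<beta> + 1))"
  shows "x / Q = Q powr (1 / (2 * \<beta> + 1) - 1)" and "x powr (- (2 * \<beta>)) = Q powr (1 / (2 * \<beta> + 1) - 1)"
proof -
  show "x / Q = Q powr (1 / (2 * \<beta> + 1) - 1)" unfolding x using Q by (simp add: powr_diff)
  have "x powr (- (2 * \<beta>)) = Q powr (1 / (2 * \<beta> + 1) * (- (2 * \<beta>)))" unfolding x by (simp add: powr_powr)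
  also have "1 / (2 * \<beta> + 1) * (- (2 * \<beta>)) = 1 / (2 * \<beta> + 1) - 1"
  proof -
    have D: "2 * \<beta> + 1 \<noteq> 0" using b by simp
    have "1 / (2 * \<beta> + 1) * (- (2 * \<beta>)) = (1 - (2 * \<beta> + 1)) / (2 * \<beta> + 1)" by simp
    also have "\<dots> = 1 / (2 * \<beta> + 1) - 1" by (subst diff_divide_distrib) (simp only: divide_self[OF D])
    finally show ?thesis .
  qed
  finally show "x powr (- (2 * \<beta>)) = Q powr (1 / (2 * \<beta> + 1) - 1)" .
qed

lemma ln_ge1: "real n \<ge> 3 \<Longrightarrow> ln (real n) \<ge> 1"
proof -
  assume n3: "real n \<ge> 3"
  have "exp 1 \<le> (3::real)" using exp_le by simp
  also have "\<dots> \<le> real n" by (rule n3)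
  finally show ?thesis using n3 by (simp add: ln_ge_iff)
qed

lemma powr_ge_from:
  fixes Q Z a :: real
  assumes "a > 0" "Z > 0" "Q \<ge> Z powr (1 / a)"
  shows "Q powr a \<ge> Z"
proof -
  have "(Z powr (1 / a)) powr a \<le> Q powr a" using assms by (intro powr_mono2) auto
  moreover have "(Z powr (1 / a)) powr a = Z" using assms by (simp add: powr_powr)
  ultimately show ?thesis by simp
qed

lemma upper_gen:
  fixes E :: "nat \<Rightarrow> nat \<Rightarrow> real" and T :: "nat \<Rightarrow> real" and m :: "nat \<Rightarrow> real"
  assumes c: "c > 0" and C: "C > 0"
    and core: "\<And>n k. n \<ge> N \<Longrightarrow> k \<ge> 1 \<Longrightarrow> c * (T k + real k * ln (real n) / real n) \<le> E n k \<and> E n k \<le> C * (T k + real k * ln (real n) / real n)"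
    and Tb: "\<And>k. k \<ge> 1 \<Longrightarrow> T k \<le> L' * real k powr (- (2 * \<beta>))" and Tnn: "\<And>k. T k \<ge> 0"
    and L': "L' \<ge> 0" and b: "\<beta> > 0" and eps: "\<epsilon> > 0"
    and m_slow: "\<And>\<delta>. \<delta> > 0 \<Longrightarrow> ((\<lambda>n. m n / real n powr \<delta>) \<longlongrightarrow> 0) sequentially"
    and qinf: "filterlim (\<lambda>n::nat. real n / ln (real n)) at_top sequentially"
    and lnsq: "eventually (\<lambda>n::nat. ln (real n) \<le> sqrt (real n)) sequentially"
  shows "\<exists>C2 N2. C2 > 0 \<and> (\<forall>n \<ge> N2. sup (Inf {ereal (E n k) | k. k \<in> Lambda_n \<epsilon> n \<and> E n k \<ge> m n * ln (real n) / real n})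
      (ereal (m n * ln (real n) / real n)) \<le> ereal (C2 * ((real n / ln (real n)) powr (- \<beta> / (2 * \<beta> + 1)))\<^sup>2))"
proof -
  define aa where "aa = 1 / (2 * \<beta> + 1)"
  have aa0: "aa > 0" and aa1: "aa < 1" unfolding aa_def using b by auto
  define Z where "Z = max (2 powr (1 / aa)) ((2 / \<epsilon>) powr (1 / (1 - aa)))"
  have ev1: "eventually (\<lambda>n. real n / ln (real n) \<ge> Z) sequentially"
    using qinf by (simp add: filterlim_at_top)
  have ev2: "eventually (\<lambda>n. m n / real n powr (aa / 2) < min c 1) sequentially"
    using m_slow[of "aa / 2"] aa0 c by (intro order_tendstoD) auto
  have ev3: "eventually (\<lambda>n. n \<ge> max N 3) sequentially" by (rule eventually_ge_at_top)
  have "eventually (\<lambda>n. real n / ln (real n) \<ge> Z \<and> m n / real n powr (aa / 2) < min c 1 \<and> n \<ge> max N 3 \<and>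
      ln (real n) \<le> sqrt (real n)) sequentially"
    using ev1 ev2 ev3 lnsq by eventually_elim blast
  then obtain N2 where N2: "\<And>n. n \<ge> N2 \<Longrightarrow> real n / ln (real n) \<ge> Z \<and> m n / real n powr (aa / 2) < min c 1 \<and> n \<ge> max N 3 \<and>
      ln (real n) \<le> sqrt (real n)" by (auto simp: eventually_sequentially)
  define C2 where "C2 = max (C * (L' + 2)) 1"
  have C2: "C2 > 0" unfolding C2_def by simp
  have "sup (Inf {ereal (E n k) | k. k \<in> Lambda_n \<epsilon> n \<and> E n k \<ge> m n * ln (real n) / real n})
      (ereal (m n * ln (real n) / real n)) \<le> ereal (C2 * ((real n / ln (real n)) powr (- \<beta> / (2 * \<beta> + 1)))\<^sup>2)"
    if n: "n \<ge> N2" for n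
  proof -
    note h = N2[OF n]
    have nN: "n \<ge> N" and n3: "real n \<ge> 3" using h by auto
    have ln1: "ln (real n) \<ge> 1" using n3 by (rule ln_ge1)
    define Q where "Q = real n / ln (real n)"
    have Q0: "Q > 0" unfolding Q_def using n3 ln1 by simp
    define R where "R = Q powr (aa - 1)"
    have R0: "R > 0" unfolding R_def using Q0 by simp
    have Rid: "((real n / ln (real n)) powr (- \<beta> / (2 * \<beta> + 1)))\<^sup>2 = R"
      unfolding R_def aa_def Q_def[symmetric] using Q0 b by (rule rate_id)
    define x where "x = Q powr aa"
    have x0: "x > 0" unfolding x_def using Q0 by simp
    have xQ: "x / Q = R" and xb: "x powr (- (2 * \<beta>)) = R"
      using rate_split[OF Q0 b, of x] unfolding x_def R_def aa_def by auto
    have QZ: "Q \<ge> Z" unfolding Q_def using h by simp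
    have x2: "x \<ge> 2" unfolding x_def using aa0 QZ unfolding Z_def by (intro powr_ge_from) auto
    have Qe: "Q powr (1 - aa) \<ge> 2 / \<epsilon>" using aa1 QZ eps unfolding Z_def by (intro powr_ge_from) auto
    have Qsplit: "Q = x * Q powr (1 - aa)" unfolding x_def using Q0 by (simp add: powr_add[symmetric])
    define k where "k = nat \<lceil>x\<rceil>"
    have kx: "real k \<ge> x" unfolding k_def using x0 by linarith
    have kx2: "real k \<le> 2 * x" unfolding k_def using x0 x2 by linarith
    have k2: "k \<ge> 2" using kx x2 by linarith
    have epsQ: "\<epsilon> * Q \<ge> 2 * x"
    proof -
      have "\<epsilon> * Q = \<epsilon> * Q powr (1 - aa) * x" using Qsplit by (simp add: mult_ac)
      also have "\<dots> \<ge> \<epsilon> * (2 / \<epsilon>) * x" using Qe eps x0 by (intro mult_right_mono mult_left_mono) auto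
      finally show ?thesis using eps by simp
    qed
    have kL: "k \<in> Lambda_n \<epsilon> n"
    proof -
      have "real k \<le> \<epsilon> * real n / ln (real n)" using kx2 epsQ unfolding Q_def by simp
      then have "int k \<le> \<lfloor>\<epsilon> * real n / ln (real n)\<rfloor>" by (simp add: le_floor_iff)
      then have "k \<le> nat \<lfloor>\<epsilon> * real n / ln (real n)\<rfloor>" by linarith
      then show ?thesis unfolding Lambda_n_def using k2 by simp
    qed
    have kq: "real k * ln (real n) / real n = real k / Q" unfolding Q_def by simp
    have mq: "m n * ln (real n) / real n = m n / Q" unfolding Q_def by simp
    have Qsq: "Q \<ge> sqrt (real n)"
    proof -
      have "real n / sqrt (real n) \<le> real n / ln (real n)" using h ln1 n3 by (intro divide_left_mono) auto
      moreover have "real n / sqrt (real n) = sqrt (real n)" using n3 by (metis real_div_sqrt of_nat_0_le_iff)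
      ultimately show ?thesis unfolding Q_def by simp
    qed
    have xn: "x \<ge> real n powr (aa / 2)"
    proof -
      have "sqrt (real n) powr aa \<le> Q powr aa" using Qsq aa0 by (intro powr_mono2) auto
      moreover have "sqrt (real n) powr aa = real n powr (aa / 2)"
        using n3 by (simp add: powr_half_sqrt[symmetric] powr_powr)
      ultimately show ?thesis unfolding x_def by simp
    qed
    have mx: "m n \<le> min c 1 * x"
    proof -
      have "m n / real n powr (aa / 2) < min c 1" using h by simp
      moreover have pos: "real n powr (aa / 2) > 0" using n3 by simp
      ultimately have "m n < min c 1 * real n powr (aa / 2)" using pos_divide_less_eq[OF pos] by blast
      also have "\<dots> \<le> min c 1 * x" using xn c by (intro mult_left_mono) auto
      finally show ?thesis by simp
    qed
    have core_k: "c * (T k + real k / Q) \<le> E n k \<and> E n k \<le> C * (T k + real k / Q)"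
      using core[OF nN, of k] k2 kq by simp
    have mem: "m n * ln (real n) / real n \<le> E n k"
    proof -
      have "min c 1 * x \<le> c * x" using x0 by (intro mult_right_mono) auto
      then have "m n \<le> c * x" using mx by linarith
      then have "m n / Q \<le> c * x / Q" using Q0 by (intro divide_right_mono) auto
      also have "\<dots> \<le> c * (real k / Q)" using kx Q0 c by (simp add: divide_right_mono)
      also have "\<dots> \<le> c * (T k + real k / Q)" using Tnn[of k] c by (intro mult_left_mono) auto
      also have "\<dots> \<le> E n k" using core_k by simp
      finally show ?thesis unfolding mq .
    qed
    have Ek: "E n k \<le> C * (L' + 2) * R"
    proof -
      have "T k \<le> L' * real k powr (- (2 * \<beta>))" using Tb k2 by simp
      also have "\<dots> \<le> L' * x powr (- (2 * \<beta>))" using L' x0 kx b by (intro mult_left_mono powr_mono2') auto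
      finally have 1: "T k \<le> L' * R" unfolding xb .
      have "real k / Q \<le> (2 * x) / Q" using kx2 Q0 by (intro divide_right_mono) auto
      then have 2: "real k / Q \<le> 2 * R" using xQ by simp
      have "E n k \<le> C * (T k + real k / Q)" using core_k by simp
      also have "\<dots> \<le> C * (L' * R + 2 * R)" using 1 2 C by (intro mult_left_mono) auto
      finally show ?thesis by (simp add: algebra_simps)
    qed
    have mR: "m n * ln (real n) / real n \<le> R"
    proof -
      have "min c 1 * x \<le> 1 * x" using x0 by (intro mult_right_mono) auto
      then have "m n \<le> x" using mx by linarith
      then have "m n / Q \<le> x / Q" using Q0 by (simp add: divide_right_mono)
      then show ?thesis unfolding mq xQ .
    qed
    have "Inf {ereal (E n k) | k. k \<in> Lambda_n \<epsilon> n \<and> E n k \<ge> m n * ln (real n) / real n} \<le> ereal (E n k)"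
      using kL mem by (intro Inf_lower) auto
    also have "\<dots> \<le> ereal (C2 * R)"
    proof -
      have "C * (L' + 2) * R \<le> C2 * R" unfolding C2_def using R0 by (intro mult_right_mono) auto
      then show ?thesis using Ek by simp
    qed
    finally have I: "Inf {ereal (E n k) | k. k \<in> Lambda_n \<epsilon> n \<and> E n k \<ge> m n * ln (real n) / real n} \<le> ereal (C2 * R)" .
    have "R \<le> C2 * R" unfolding C2_def using R0 by (simp add: mult_le_cancel_right1)
    then have "ereal (m n * ln (real n) / real n) \<le> ereal (C2 * R)" using mR by simp
    with I show ?thesis unfolding Rid by simp
  qed
  then show ?thesis using C2 by blast
qed

lemma lower_gen:
  fixes E :: "nat \<Rightarrow> nat \<Rightarrow> real" and T :: "nat \<Rightarrow> real" and m :: "nat \<Rightarrow> real"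
  assumes c: "c > 0"
    and core: "\<And>n k. n \<ge> N \<Longrightarrow> k \<ge> 1 \<Longrightarrow> c * (T k + real k * ln (real n) / real n) \<le> E n k"
    and Tl: "\<And>k. k \<ge> 1 \<Longrightarrow> Lt * real k powr (- (2 * \<beta>)) \<le> T k" and Lt: "Lt > 0" and b: "\<beta> > 0"
  shows "\<exists>c2 N2. c2 > 0 \<and> (\<forall>n \<ge> N2. ereal (c2 * ((real n / ln (real n)) powr (- \<beta> / (2 * \<beta> + 1)))\<^sup>2) \<le>
      sup (Inf {ereal (E n k) | k. k \<in> Lambda_n \<epsilon> n \<and> E n k \<ge> m n * ln (real n) / real n})
      (ereal (m n * ln (real n) / real n)))"
proof -
  define c2 where "c2 = c * min Lt 1"
  have c2: "c2 > 0" unfolding c2_def using c Lt by simp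
  have "ereal (c2 * ((real n / ln (real n)) powr (- \<beta> / (2 * \<beta> + 1)))\<^sup>2) \<le>
      sup (Inf {ereal (E n k) | k. k \<in> Lambda_n \<epsilon> n \<and> E n k \<ge> m n * ln (real n) / real n})
      (ereal (m n * ln (real n) / real n))" if n: "n \<ge> max N 3" for n
  proof -
    have nN: "n \<ge> N" and n3: "real n \<ge> 3" using n by auto
    have ln1: "ln (real n) \<ge> 1" using n3 by (rule ln_ge1)
    define Q where "Q = real n / ln (real n)"
    have Q0: "Q > 0" unfolding Q_def using n3 ln1 by simp
    define R where "R = Q powr (1 / (2 * \<beta> + 1) - 1)"
    have R0: "R > 0" unfolding R_def using Q0 by simp
    have Rid: "((real n / ln (real n)) powr (- \<beta> / (2 * \<beta> + 1)))\<^sup>2 = R"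
      unfolding R_def Q_def[symmetric] using Q0 b by (rule rate_id)
    define x where "x = Q powr (1 / (2 * \<beta> + 1))"
    have x0: "x > 0" unfolding x_def using Q0 by simp
    have xQ: "x / Q = R" and xb: "x powr (- (2 * \<beta>)) = R"
      using rate_split[OF Q0 b, of x] unfolding x_def R_def by auto
    have "ereal (c2 * R) \<le> Inf {ereal (E n k) | k. k \<in> Lambda_n \<epsilon> n \<and> E n k \<ge> m n * ln (real n) / real n}"
    proof (rule Inf_greatest)
      fix z assume "z \<in> {ereal (E n k) | k. k \<in> Lambda_n \<epsilon> n \<and> E n k \<ge> m n * ln (real n) / real n}"
      then obtain k where z: "z = ereal (E n k)" and kL: "k \<in> Lambda_n \<epsilon> n" by blast
      have k1: "k \<ge> 1" using kL unfolding Lambda_n_def by simp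
      have kq: "real k * ln (real n) / real n = real k / Q" unfolding Q_def by simp
      have Tk: "Lt * real k powr (- (2 * \<beta>)) \<le> T k" using Tl k1 by simp
      have Tk0: "T k \<ge> 0" using Tk Lt by (smt (verit) mult_nonneg_nonneg powr_ge_zero)
      have key: "min Lt 1 * R \<le> T k + real k / Q"
      proof (cases "real k \<ge> x")
        case True
        then have "x / Q \<le> real k / Q" using Q0 by (intro divide_right_mono) auto
        then have "R \<le> real k / Q" using xQ by simp
        moreover have "min Lt 1 * R \<le> 1 * R" using R0 by (intro mult_right_mono) auto
        ultimately show ?thesis using Tk0 by linarith
      next
        case False
        then have "x powr (- (2 * \<beta>)) \<le> real k powr (- (2 * \<beta>))" using k1 b by (intro powr_mono2') auto
        then have "R \<le> real k powr (- (2 * \<beta>))" using xb by simp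
        then have "Lt * R \<le> Lt * real k powr (- (2 * \<beta>))" using Lt by (intro mult_left_mono) auto
        moreover have "min Lt 1 * R \<le> Lt * R" using R0 by (intro mult_right_mono) auto
        moreover have "real k / Q \<ge> 0" using Q0 by simp
        ultimately show ?thesis using Tk by linarith
      qed
      have "c2 * R = c * (min Lt 1 * R)" unfolding c2_def by simp
      also have "\<dots> \<le> c * (T k + real k / Q)" using key c by (intro mult_left_mono) auto
      also have "\<dots> \<le> E n k" using core[OF nN k1] kq by simp
      finally show "ereal (c2 * R) \<le> z" unfolding z by simp
    qed
    also have "\<dots> \<le> sup (Inf {ereal (E n k) | k. k \<in> Lambda_n \<epsilon> n \<and> E n k \<ge> m n * ln (real n) / real n})
      (ereal (m n * ln (real n) / real n))" by (rule sup_ge1)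
    finally show ?thesis unfolding Rid .
  qed
  then show ?thesis using c2 by blast
qed

definition thP :: "real \<Rightarrow> real \<Rightarrow> nat \<Rightarrow> real" where
  "thP \<beta> L j = sqrt (L * real (j + 1) powr (- (2 * \<beta> + 1)))"

lemma thP_sq: "L \<ge> 0 \<Longrightarrow> (thP \<beta> L j)\<^sup>2 = L * real (j + 1) powr (- (2 * \<beta> + 1))"
  unfolding thP_def by simp

lemma thP_H: "L > 0 \<Longrightarrow> thP \<beta> L \<in> H_inf \<beta> L"
proof -
  assume L: "L > 0"
  have "real (j + 1) powr (2 * \<beta> + 1) * (thP \<beta> L j)\<^sup>2 \<le> L" for j
  proof -
    have "real (j + 1) powr (2 * \<beta> + 1) * (thP \<beta> L j)\<^sup>2
        = L * (real (j + 1) powr (2 * \<beta> + 1) * real (j + 1) powr (- (2 * \<beta> + 1)))"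
      using thP_sq[of L \<beta> j] L by (simp add: mult_ac)
    also have "real (j + 1) powr (2 * \<beta> + 1) * real (j + 1) powr (- (2 * \<beta> + 1)) = 1"
      by (simp add: powr_add[symmetric])
    finally show ?thesis by simp
  qed
  then show ?thesis unfolding H_inf_def by blast
qed

lemma thP_summable: "\<beta> > 0 \<Longrightarrow> L > 0 \<Longrightarrow> summable (\<lambda>j. (thP \<beta> L j)\<^sup>2)"
proof -
  assume b: "\<beta> > 0" and L: "L > 0"
  have "summable (\<lambda>n. real n powr (- (2 * \<beta> + 1)))" using b by (subst summable_real_powr_iff) auto
  then have "summable (\<lambda>j. real (j + 1) powr (- (2 * \<beta> + 1)))"
    using summable_iff_shift[of "\<lambda>n. real n powr (- (2 * \<beta> + 1))" 1] by simp
  then have "summable (\<lambda>j. L * real (j + 1) powr (- (2 * \<beta> + 1)))" by (rule summable_mult)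
  then show ?thesis using thP_sq[of L \<beta>] L by simp
qed

lemma thP_tail_lower:
  assumes b: "\<beta> > 0" and L: "L > 0" and k: "k \<ge> 1"
  shows "L * 2 powr (- (2 * \<beta> + 1)) * real k powr (- (2 * \<beta>)) \<le> tail_sq (thP \<beta> L) k"
proof -
  have s: "summable (\<lambda>j. (thP \<beta> L (j + k))\<^sup>2)"
    using summable_iff_shift[of "\<lambda>j. (thP \<beta> L j)\<^sup>2" k] thP_summable[OF b L] by simp
  have "(\<Sum>j<k. (thP \<beta> L (j + k))\<^sup>2) \<le> tail_sq (thP \<beta> L) k"
    unfolding tail_sq_def by (intro sum_le_suminf s) auto
  moreover have "(\<Sum>j<k. L * (2 * real k) powr (- (2 * \<beta> + 1))) \<le> (\<Sum>j<k. (thP \<beta> L (j + k))\<^sup>2)"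
  proof (intro sum_mono)
    fix j assume "j \<in> {..<k}"
    then have "real (j + k + 1) \<le> 2 * real k" by simp
    then have "(2 * real k) powr (- (2 * \<beta> + 1)) \<le> real (j + k + 1) powr (- (2 * \<beta> + 1))"
      using b by (intro powr_mono2') auto
    then have "L * (2 * real k) powr (- (2 * \<beta> + 1)) \<le> L * real (j + k + 1) powr (- (2 * \<beta> + 1))"
      using L by simp
    then show "L * (2 * real k) powr (- (2 * \<beta> + 1)) \<le> (thP \<beta> L (j + k))\<^sup>2"
      using thP_sq[of L \<beta> "j + k"] L by simp
  qed
  moreover have "(\<Sum>j<k. L * (2 * real k) powr (- (2 * \<beta> + 1))) = L * 2 powr (- (2 * \<beta> + 1)) * real k powr (- (2 * \<beta>))"
  proof -
    have p1: "(2 * real k) powr (- (2 * \<beta> + 1)) = 2 powr (- (2 * \<beta> + 1)) * real k powr (- (2 * \<beta> + 1))"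
      by (simp add: powr_mult)
    have p2: "real k powr (- (2 * \<beta> + 1)) = real k powr (- (2 * \<beta>)) * real k powr (-1)"
    proof -
      have e: "- (2 * \<beta> + 1) = - (2 * \<beta>) + (-1)" by simp
      show ?thesis unfolding e by (rule powr_add)
    qed
    have p3: "real k * real k powr (-1) = 1" using k by (simp add: powr_minus)
    have "(\<Sum>j<k. L * (2 * real k) powr (- (2 * \<beta> + 1))) = real k * (L * (2 * real k) powr (- (2 * \<beta> + 1)))" by simp
    also have "\<dots> = L * 2 powr (- (2 * \<beta> + 1)) * real k powr (- (2 * \<beta>)) * (real k * real k powr (-1))"
      unfolding p1 p2 by (simp add: mult_ac)
    also have "\<dots> = L * 2 powr (- (2 * \<beta> + 1)) * real k powr (- (2 * \<beta>))" unfolding p3 by simp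
    finally show ?thesis .
  qed
  ultimately show ?thesis by linarith
qed


lemma tail_nonneg: "summable (\<lambda>j. (a j)\<^sup>2) \<Longrightarrow> tail_sq a k \<ge> 0"
proof -
  assume a: "summable (\<lambda>j. (a j)\<^sup>2)"
  have "summable (\<lambda>j. (a (j + k))\<^sup>2)" using summable_iff_shift[of "\<lambda>j. (a j)\<^sup>2" k] a by simp
  then show ?thesis unfolding tail_sq_def by (intro suminf_nonneg) auto
qed


locale gsetup =
  fixes g :: "real \<Rightarrow> real"
  assumes g_cont: "continuous_on UNIV g"
    and g_pos: "\<And>x. g x > 0"
    and g_int: "integrable lborel g"
    and g_one: "integral\<^sup>L lborel g = 1"
begin

definition "Mg = density lborel (\<lambda>x. ennreal (g x))"
definition "Pk k = PiM {..<k} (\<lambda>_. Mg)"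

lemma g_meas[measurable]: "g \<in> borel_measurable borel"
  using g_cont by (intro borel_measurable_continuous_onI) auto

lemma sets_Mg[simp, measurable_cong]: "sets Mg = sets borel"
  by (simp add: Mg_def)

lemma space_Mg[simp]: "space Mg = UNIV"
  by (simp add: Mg_def)

lemma prob_Mg: "prob_space Mg"
proof
  have "emeasure Mg (space Mg) = (\<integral>\<^sup>+ x. ennreal (g x) \<partial>lborel)"
    by (simp add: Mg_def emeasure_density)
  also have "\<dots> = ennreal (integral\<^sup>L lborel g)"
    using g_int g_pos by (intro nn_integral_eq_integral) (auto intro: less_imp_le)
  finally show "emeasure Mg (space Mg) = 1" using g_one by simp
qed

interpretation Mg: prob_space Mg by (rule prob_Mg)

lemma psf: "product_sigma_finite (\<lambda>_. Mg)"
  unfolding product_sigma_finite_def using Mg.sigma_finite_measure_axioms by simp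

interpretation PS: product_sigma_finite "\<lambda>_::nat. Mg" by (rule psf)

lemma prob_Pk: "prob_space (Pk k)"
  unfolding Pk_def by (intro prob_space_PiM prob_Mg)

lemma Mg_finite_null: "finite A \<Longrightarrow> emeasure Mg A = 0"
proof -
  assume "finite A"
  then have n: "A \<in> null_sets lborel" by (rule finite_imp_null_set_lborel)
  then have "A \<in> sets borel" by auto
  then have "emeasure Mg A = (\<integral>\<^sup>+ x. ennreal (g x) * indicator A x \<partial>lborel)"
    by (simp add: Mg_def emeasure_density)
  also have "\<dots> = 0" using n by (rule nn_integral_null_set)
  finally show ?thesis .
qed

lemma sq_eq_cases: "(y - b)\<^sup>2 = (c::real) \<Longrightarrow> y \<in> {b + sqrt c, b - sqrt c}"
proof -
  assume h: "(y - b)\<^sup>2 = c"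
  then have "c \<ge> 0" by auto
  have "\<bar>y - b\<bar> = sqrt c" using h by (metis real_sqrt_abs)
  then show ?thesis by (cases "y - b \<ge> 0") auto
qed

lemma point_null:
  "emeasure (Pk (Suc k)) {x \<in> space (Pk (Suc k)). (\<Sum>j<Suc k. (x j - a j)\<^sup>2) = t} = 0"
proof -
  let ?A = "{x \<in> space (Pk (Suc k)). (\<Sum>j<Suc k. (x j - a j)\<^sup>2) = t}"
  have Am: "?A \<in> sets (PiM (insert k {..<k}) (\<lambda>_. Mg))"
    unfolding Pk_def lessThan_Suc[symmetric] by measurable
  have "emeasure (Pk (Suc k)) ?A = (\<integral>\<^sup>+ x. indicator ?A x \<partial>(PiM (insert k {..<k}) (\<lambda>_. Mg)))"
    using Am by (simp add: Pk_def lessThan_Suc)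
  also have "\<dots> = (\<integral>\<^sup>+ x. (\<integral>\<^sup>+ y. indicator ?A (x(k := y)) \<partial>Mg) \<partial>(PiM {..<k} (\<lambda>_. Mg)))"
    using Am by (intro PS.product_nn_integral_insert) auto
  also have "\<dots> = (\<integral>\<^sup>+ x. 0 \<partial>(PiM {..<k} (\<lambda>_. Mg)))"
  proof (intro nn_integral_cong)
    fix x
    let ?c = "t - (\<Sum>j<k. (x j - a j)\<^sup>2)"
    have "(\<integral>\<^sup>+ y. indicator ?A (x(k := y)) \<partial>Mg) \<le> (\<integral>\<^sup>+ y. indicator {a k + sqrt ?c, a k - sqrt ?c} y \<partial>Mg)"
    proof (intro nn_integral_mono)
      fix y
      show "indicator ?A (x(k := y)) \<le> (indicator {a k + sqrt ?c, a k - sqrt ?c} y :: ennreal)"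
      proof (cases "x(k := y) \<in> ?A")
        case True
        then have "(\<Sum>j<Suc k. ((x(k := y)) j - a j)\<^sup>2) = t" by blast
        moreover have "(\<Sum>j<Suc k. ((x(k := y)) j - a j)\<^sup>2) = (\<Sum>j<k. (x j - a j)\<^sup>2) + (y - a k)\<^sup>2"
          by (auto simp add: lessThan_Suc intro!: sum.cong)
        ultimately have "(y - a k)\<^sup>2 = ?c" by simp
        then have "y \<in> {a k + sqrt ?c, a k - sqrt ?c}" by (rule sq_eq_cases)
        then show ?thesis by (simp add: indicator_def)
      qed simp
    qed
    also have "\<dots> = emeasure Mg {a k + sqrt ?c, a k - sqrt ?c}"
      by (intro nn_integral_indicator) simp
    also have "\<dots> = 0" by (intro Mg_finite_null) simp
    finally show "(\<integral>\<^sup>+ y. indicator ?A (x(k := y)) \<partial>Mg) = 0" by simp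
  qed
  also have "\<dots> = 0" by simp
  finally show ?thesis .
qed

definition "Sf a k x = (\<Sum>j<k. (x j - a j)\<^sup>2) + tail_sq a k"
definition "Dk a k = distr (Pk k) borel (Sf a k)"

lemma Sf_meas[measurable]: "Sf a k \<in> borel_measurable (Pk k)"
  unfolding Sf_def Pk_def by measurable


lemma real_dist_Dk: "real_distribution (Dk a k)"
proof -
  interpret P: prob_space "Pk k" by (rule prob_Pk)
  show ?thesis unfolding Dk_def by (intro P.real_distribution_distr) simp
qed

lemma cdf_Dk: "cdf (Dk a k) v = measure (Pk k) {x \<in> space (Pk k). Sf a k x \<le> v}"
  unfolding cdf_def Dk_def
  by (subst measure_distr) (auto intro!: arg_cong2[where f=measure])

lemma prior_ball_cdf: "prior_ball g a k r = cdf (Dk a k) (r\<^sup>2)"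
  unfolding cdf_Dk prior_ball_def Pk_def Mg_def Sf_def by simp

lemma isCont_cdf_Dk: "k \<ge> 1 \<Longrightarrow> isCont (cdf (Dk a k)) v"
proof -
  assume "k \<ge> 1"
  then obtain k' where k: "k = Suc k'" by (cases k) auto
  interpret D: real_distribution "Dk a k" by (rule real_dist_Dk)
  interpret P: prob_space "Pk k" by (rule prob_Pk)
  have "measure (Dk a k) {v} = measure (Pk k) {x \<in> space (Pk k). Sf a k x = v}"
    unfolding Dk_def by (subst measure_distr) (auto intro!: arg_cong2[where f=measure])
  also have "{x \<in> space (Pk k). Sf a k x = v} = {x \<in> space (Pk (Suc k')). (\<Sum>j<Suc k'. (x j - a j)\<^sup>2) = v - tail_sq a k}"
    unfolding Sf_def k by auto
  also have "measure (Pk k) \<dots> = 0"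
    using point_null[of k' a "v - tail_sq a k"] unfolding k by (simp add: measure_def)
  finally show ?thesis using D.isCont_cdf by simp
qed

lemma eps_exists:
  assumes n: "n \<ge> 1" and k: "k \<ge> 1" and K: "K > 0" and T: "tail_sq a k \<ge> 0"
  shows "\<exists>!e. e > 0 \<and> prior_ball g a k (K * e) = exp (- (real n * e\<^sup>2))"
proof -
  interpret D: real_distribution "Dk a k" by (rule real_dist_Dk)
  interpret P: prob_space "Pk k" by (rule prob_Pk)
  define F where "F = cdf (Dk a k)"
  have Fc: "isCont F v" for v unfolding F_def using k by (rule isCont_cdf_Dk)
  define phi where "phi e = F ((K * e)\<^sup>2) - exp (- (real n * e\<^sup>2))" for e
  have phic: "continuous_on UNIV phi"
    unfolding phi_def
    by (intro continuous_at_imp_continuous_on ballI continuous_intros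
          continuous_at_compose[OF _ Fc, unfolded comp_def])
  have F0: "F 0 = 0"
  proof -
    have "F 0 = measure (Pk k) {x \<in> space (Pk k). Sf a k x \<le> 0}" unfolding F_def cdf_Dk ..
    also have "{x \<in> space (Pk k). Sf a k x \<le> 0} = {x \<in> space (Pk k). Sf a k x = 0}"
    proof -
      have "Sf a k x \<ge> 0" for x unfolding Sf_def using T by (intro add_nonneg_nonneg sum_nonneg) auto
      then show ?thesis by (auto intro: antisym)
    qed
    also have "measure (Pk k) \<dots> = measure (Dk a k) {0}"
      unfolding Dk_def by (subst measure_distr) (auto intro!: arg_cong2[where f=measure])
    also have "\<dots> = 0" using D.isCont_cdf Fc unfolding F_def by simp
    finally show ?thesis .
  qed
  have "eventually (\<lambda>v. F v > 1/2) at_top"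
    using D.cdf_lim_at_top_prob unfolding F_def by (rule order_tendstoD) simp
  then obtain v0 where v0: "\<And>v. v \<ge> v0 \<Longrightarrow> F v > 1/2" by (auto simp: eventually_at_top_linorder)
  define b where "b = max 1 (sqrt \<bar>v0\<bar> / K)"
  have b1: "b \<ge> 1" unfolding b_def by simp
  have "sqrt \<bar>v0\<bar> / K \<le> b" unfolding b_def by simp
  then have "K * (sqrt \<bar>v0\<bar> / K) \<le> K * b" using K by (intro mult_left_mono) auto
  then have "K * b \<ge> sqrt \<bar>v0\<bar>" using K by simp
  then have "(K * b)\<^sup>2 \<ge> (sqrt \<bar>v0\<bar>)\<^sup>2" by (intro power_mono) auto
  then have "(K * b)\<^sup>2 \<ge> v0" by simp
  then have Fb: "F ((K * b)\<^sup>2) > 1/2" by (rule v0)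
  have "b\<^sup>2 \<ge> 1" using b1 by (simp add: one_le_power)
  moreover have "real n \<ge> 1" using n by simp
  ultimately have "real n * b\<^sup>2 \<ge> 1 * 1" by (intro mult_mono) auto
  then have "exp (- (real n * b\<^sup>2)) \<le> exp (-1)" by simp
  also have "exp (-1::real) \<le> 1/2"
  proof -
    have "exp (1::real) \<ge> 2" using exp_ge_add_one_self_aux[of 1] by simp
    then show ?thesis by (simp add: exp_minus field_simps)
  qed
  finally have "phi b \<ge> 0" unfolding phi_def using Fb by simp
  moreover have "phi 0 \<le> 0" unfolding phi_def using F0 by simp
  ultimately obtain e where e: "0 \<le> e" "e \<le> b" "phi e = 0"
    using IVT'[of phi 0 0 b] phic b1 by (auto intro: continuous_on_subset)
  have "e \<noteq> 0" using e F0 unfolding phi_def by auto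
  with e have ex: "e > 0 \<and> prior_ball g a k (K * e) = exp (- (real n * e\<^sup>2))"
    unfolding prior_ball_cdf F_def[symmetric] phi_def by auto
  have mono: "e1 > 0 \<Longrightarrow> e1 \<le> e2 \<Longrightarrow> prior_ball g a k (K * e1) \<le> prior_ball g a k (K * e2)" for e1 e2
    unfolding prior_ball_cdf using K by (intro D.cdf_nondecreasing power_mono) auto
  show ?thesis
  proof (rule ex1I[of _ e])
    show "e > 0 \<and> prior_ball g a k (K * e) = exp (- (real n * e\<^sup>2))" by (rule ex)
  next
    fix e' assume e': "e' > 0 \<and> prior_ball g a k (K * e') = exp (- (real n * e'\<^sup>2))"
    have "False" if lt: "e1 < e2" and h1: "e1 > 0 \<and> prior_ball g a k (K * e1) = exp (- (real n * e1\<^sup>2))"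
      and h2: "e2 > 0 \<and> prior_ball g a k (K * e2) = exp (- (real n * e2\<^sup>2))" for e1 e2
    proof -
      have "e1\<^sup>2 < e2\<^sup>2" using lt h1 by (intro power_strict_mono) auto
      then have "real n * e1\<^sup>2 < real n * e2\<^sup>2" using n by simp
      then have "exp (- (real n * e2\<^sup>2)) < exp (- (real n * e1\<^sup>2))" by simp
      moreover have "prior_ball g a k (K * e1) \<le> prior_ball g a k (K * e2)" using lt h1 by (intro mono) auto
      ultimately show False using h1 h2 by simp
    qed
    then show "e' = e" using e' ex by (metis linorder_neqE_linordered_idom)
  qed
qed

lemma pb_mono: "K > 0 \<Longrightarrow> 0 \<le> e1 \<Longrightarrow> e1 \<le> e2 \<Longrightarrow> prior_ball g a k (K * e1) \<le> prior_ball g a k (K * e2)"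
proof -
  assume "K > 0" "0 \<le> e1" "e1 \<le> e2"
  interpret D: real_distribution "Dk a k" by (rule real_dist_Dk)
  show ?thesis unfolding prior_ball_cdf using \<open>K > 0\<close> \<open>0 \<le> e1\<close> \<open>e1 \<le> e2\<close>
    by (intro D.cdf_nondecreasing power_mono) auto
qed

lemma eps_prop:
  assumes n: "n \<ge> 1" and k: "k \<ge> 1" and K: "K > 0" and T: "tail_sq a k \<ge> 0"
  shows "eps_n g a K n k > 0 \<and> prior_ball g a k (K * eps_n g a K n k) = exp (- (real n * (eps_n g a K n k)\<^sup>2))"
  unfolding eps_n_def by (rule theI'[OF eps_exists[OF assms]])

lemma Mg_interval_upper:
  assumes s: "s \<ge> 0" and G: "\<And>x. x \<in> {b - s .. b + s} \<Longrightarrow> g x \<le> G"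
  shows "emeasure Mg {b - s .. b + s} \<le> ennreal (2 * s * G)"
proof -
  have G0: "G \<ge> 0" using G[of b] g_pos[of b] s by (smt (verit) atLeastAtMost_iff)
  have "emeasure Mg {b - s .. b + s} = (\<integral>\<^sup>+ x. ennreal (g x) * indicator {b - s .. b + s} x \<partial>lborel)"
    by (simp add: Mg_def emeasure_density)
  also have "\<dots> \<le> (\<integral>\<^sup>+ x. ennreal G * indicator {b - s .. b + s} x \<partial>lborel)"
    by (intro nn_integral_mono) (auto simp: indicator_def G intro!: ennreal_leI)
  also have "\<dots> = ennreal G * emeasure lborel {b - s .. b + s}"
    by (intro nn_integral_cmult_indicator) simp
  also have "\<dots> = ennreal (2 * s * G)" using s G0 by (simp add: ennreal_mult[symmetric] mult_ac)
  finally show ?thesis .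
qed

lemma Mg_interval_lower:
  assumes s: "s \<ge> 0" and m: "m \<ge> 0" and G: "\<And>x. x \<in> {b - s .. b + s} \<Longrightarrow> m \<le> g x"
  shows "ennreal (2 * s * m) \<le> emeasure Mg {b - s .. b + s}"
proof -
  have "ennreal (2 * s * m) = ennreal m * emeasure lborel {b - s .. b + s}" using s m by (simp add: ennreal_mult[symmetric] mult_ac)
  also have "\<dots> = (\<integral>\<^sup>+ x. ennreal m * indicator {b - s .. b + s} x \<partial>lborel)"
    by (intro nn_integral_cmult_indicator[symmetric]) simp
  also have "\<dots> \<le> (\<integral>\<^sup>+ x. ennreal (g x) * indicator {b - s .. b + s} x \<partial>lborel)"
    by (intro nn_integral_mono) (auto simp: indicator_def G intro!: ennreal_leI)
  also have "\<dots> = emeasure Mg {b - s .. b + s}"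
    by (simp add: Mg_def emeasure_density)
  finally show ?thesis .
qed

lemma box_lower:
  assumes d: "d \<ge> 0" and m: "m \<ge> 0" and r: "real k * d\<^sup>2 + tail_sq a k \<le> r\<^sup>2"
    and G: "\<And>j x. j < k \<Longrightarrow> x \<in> {a j - d .. a j + d} \<Longrightarrow> m \<le> g x"
  shows "(2 * d * m) ^ k \<le> prior_ball g a k r"
proof -
  interpret P: prob_space "Pk k" by (rule prob_Pk)
  let ?B = "PiE {..<k} (\<lambda>j. {a j - d .. a j + d})"
  have Bs: "?B \<in> sets (Pk k)" unfolding Pk_def by (intro sets_PiM_I_finite) auto
  have "emeasure (Pk k) ?B = (\<Prod>j<k. emeasure Mg {a j - d .. a j + d})"
    unfolding Pk_def by (intro PS.emeasure_PiM) auto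
  also have "\<dots> = (\<Prod>j<k. ennreal (measure Mg {a j - d .. a j + d}))"
    by (simp add: Mg.emeasure_eq_measure)
  also have "\<dots> = ennreal (\<Prod>j<k. measure Mg {a j - d .. a j + d})"
    by (intro prod_ennreal) auto
  finally have "measure (Pk k) ?B = (\<Prod>j<k. measure Mg {a j - d .. a j + d})"
    by (simp add: P.emeasure_eq_measure prod_nonneg)
  moreover have "(2 * d * m) ^ k \<le> (\<Prod>j<k. measure Mg {a j - d .. a j + d})"
  proof -
    have "(2 * d * m) ^ k = (\<Prod>j<k. 2 * d * m)" by simp
    also have "\<dots> \<le> (\<Prod>j<k. measure Mg {a j - d .. a j + d})"
    proof (intro prod_mono conjI)
      fix j assume "j \<in> {..<k}"
      then have "ennreal (2 * d * m) \<le> emeasure Mg {a j - d .. a j + d}"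
        using d m G by (intro Mg_interval_lower) auto
      then show "2 * d * m \<le> measure Mg {a j - d .. a j + d}"
        by (simp add: Mg.emeasure_eq_measure)
    qed (use d m in auto)
    finally show ?thesis .
  qed
  moreover have "measure (Pk k) ?B \<le> measure (Pk k) {x \<in> space (Pk k). Sf a k x \<le> r\<^sup>2}"
  proof (intro P.finite_measure_mono)
    show "?B \<subseteq> {x \<in> space (Pk k). Sf a k x \<le> r\<^sup>2}"
    proof
      fix x assume x: "x \<in> ?B"
      then have "x \<in> space (Pk k)" using Bs sets.sets_into_space by blast
      moreover have "(\<Sum>j<k. (x j - a j)\<^sup>2) \<le> (\<Sum>j<k. d\<^sup>2)"
      proof (intro sum_mono)
        fix j assume "j \<in> {..<k}"
        then have "a j - d \<le> x j \<and> x j \<le> a j + d" using x by (auto simp: PiE_iff)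
        then have "\<bar>x j - a j\<bar> \<le> d" by (simp add: abs_le_iff)
        then show "(x j - a j)\<^sup>2 \<le> d\<^sup>2" by (metis abs_ge_zero power2_abs power_mono)
      qed
      ultimately show "x \<in> {x \<in> space (Pk k). Sf a k x \<le> r\<^sup>2}" using r by (simp add: Sf_def)
    qed
  qed (auto simp: Sf_def Pk_def)
  ultimately show ?thesis unfolding prior_ball_cdf cdf_Dk by linarith
qed

lemma chernoff:
  assumes l: "l > 0" and s: "s \<ge> 0" and T: "tail_sq a k \<ge> 0"
    and G: "\<And>j x. j < k \<Longrightarrow> x \<in> {a j - s .. a j + s} \<Longrightarrow> g x \<le> G"
  shows "prior_ball g a k r \<le> exp (l * r\<^sup>2) * (2 * s * G + exp (- (l * s\<^sup>2))) ^ k"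
proof (cases "k = 0")
  case True
  interpret P: prob_space "Pk k" by (rule prob_Pk)
  have e1: "1 \<le> exp (l * r\<^sup>2)" using l by simp
  have "measure (Pk k) {x \<in> space (Pk k). Sf a k x \<le> r\<^sup>2} \<le> exp (l * r\<^sup>2) * (2 * s * G + exp (- (l * s\<^sup>2))) ^ k"
    using order_trans[OF P.prob_le_1 e1] True by simp
  then show ?thesis unfolding prior_ball_cdf cdf_Dk .
next
  case False
  interpret P: prob_space "Pk k" by (rule prob_Pk)
  have "a 0 \<in> {a 0 - s .. a 0 + s}" using s by simp
  then have "g (a 0) \<le> G" using G False by blast
  then have G0: "G \<ge> 0" using g_pos[of "a 0"] by linarith
  let ?A = "{x \<in> space (Pk k). Sf a k x \<le> r\<^sup>2}"
  let ?c = "2 * s * G + exp (- (l * s\<^sup>2))"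
  have Am: "?A \<in> sets (Pk k)" by measurable
  have "emeasure (Pk k) ?A = (\<integral>\<^sup>+ x. indicator ?A x \<partial>Pk k)" using Am by simp
  also have "\<dots> \<le> (\<integral>\<^sup>+ x. ennreal (exp (l * r\<^sup>2)) * (\<Prod>j<k. ennreal (exp (- (l * (x j - a j)\<^sup>2)))) \<partial>Pk k)"
  proof (intro nn_integral_mono)
    fix x
    show "indicator ?A x \<le> ennreal (exp (l * r\<^sup>2)) * (\<Prod>j<k. ennreal (exp (- (l * (x j - a j)\<^sup>2))))"
    proof (cases "x \<in> ?A")
      case True
      then have "(\<Sum>j<k. (x j - a j)\<^sup>2) \<le> r\<^sup>2" using T by (simp add: Sf_def)
      then have "0 \<le> l * r\<^sup>2 + (\<Sum>j<k. - (l * (x j - a j)\<^sup>2))" using l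
        by (simp add: sum_negf sum_distrib_left[symmetric])
      then have "1 \<le> exp (l * r\<^sup>2 + (\<Sum>j<k. - (l * (x j - a j)\<^sup>2)))" by simp
      also have "\<dots> = exp (l * r\<^sup>2) * (\<Prod>j<k. exp (- (l * (x j - a j)\<^sup>2)))"
        by (simp add: exp_add exp_sum)
      finally have "ennreal 1 \<le> ennreal (exp (l * r\<^sup>2) * (\<Prod>j<k. exp (- (l * (x j - a j)\<^sup>2))))"
        by (intro ennreal_leI)
      also have "\<dots> = ennreal (exp (l * r\<^sup>2)) * (\<Prod>j<k. ennreal (exp (- (l * (x j - a j)\<^sup>2))))"
        by (simp add: ennreal_mult prod_nonneg prod_ennreal)
      finally show ?thesis using True by simp
    qed simp
  qed
  also have "\<dots> = ennreal (exp (l * r\<^sup>2)) * (\<integral>\<^sup>+ x. (\<Prod>j<k. ennreal (exp (- (l * (x j - a j)\<^sup>2)))) \<partial>Pk k)"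
    by (intro nn_integral_cmult) (simp add: Pk_def)
  also have "(\<integral>\<^sup>+ x. (\<Prod>j<k. ennreal (exp (- (l * (x j - a j)\<^sup>2)))) \<partial>Pk k) =
      (\<Prod>j<k. (\<integral>\<^sup>+ y. ennreal (exp (- (l * (y - a j)\<^sup>2))) \<partial>Mg))"
    unfolding Pk_def by (intro PS.product_nn_integral_prod[where f="\<lambda>j y. ennreal (exp (- (l * (y - a j)\<^sup>2)))"]) auto
  also have "\<dots> \<le> (\<Prod>j<k. ennreal ?c)"
  proof (intro prod_mono_ennreal)
    fix j assume j: "j \<in> {..<k}"
    let ?I = "{a j - s .. a j + s}"
    have "(\<integral>\<^sup>+ y. ennreal (exp (- (l * (y - a j)\<^sup>2))) \<partial>Mg) \<le>
        (\<integral>\<^sup>+ y. indicator ?I y + ennreal (exp (- (l * s\<^sup>2))) \<partial>Mg)"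
    proof (intro nn_integral_mono)
      fix y
      show "ennreal (exp (- (l * (y - a j)\<^sup>2))) \<le> indicator ?I y + ennreal (exp (- (l * s\<^sup>2)))"
      proof (cases "y \<in> ?I")
        case True
        have "exp (- (l * (y - a j)\<^sup>2)) \<le> 1" using l by simp
        then have "ennreal (exp (- (l * (y - a j)\<^sup>2))) \<le> 1" by (simp add: ennreal_le_1)
        then show ?thesis using True by (simp add: add_increasing2)
      next
        case False
        then have "\<bar>y - a j\<bar> > s" by auto
        then have "s\<^sup>2 < (y - a j)\<^sup>2" using s by (metis abs_ge_zero power2_abs power_strict_mono zero_less_numeral)
        then have "exp (- (l * (y - a j)\<^sup>2)) \<le> exp (- (l * s\<^sup>2))" using l by simp
        then show ?thesis using False by (simp add: ennreal_leI)
      qed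
    qed
    also have "\<dots> = emeasure Mg ?I + ennreal (exp (- (l * s\<^sup>2)))"
      using Mg.emeasure_space_1 by (subst nn_integral_add) auto
    also have "\<dots> \<le> ennreal (2 * s * G) + ennreal (exp (- (l * s\<^sup>2)))"
      using j s G by (intro add_right_mono Mg_interval_upper) auto
    also have "\<dots> = ennreal ?c" using s G0 by (simp add: ennreal_plus)
    finally show "(\<integral>\<^sup>+ y. ennreal (exp (- (l * (y - a j)\<^sup>2))) \<partial>Mg) \<le> ennreal ?c" .
  qed
  finally have "emeasure (Pk k) ?A \<le> ennreal (exp (l * r\<^sup>2)) * (\<Prod>j<k. ennreal ?c)"
    by (simp add: mult_left_mono)
  also have "(\<Prod>j<k. ennreal ?c) = ennreal (?c ^ k)"
  proof -
    have c0: "?c \<ge> 0" using s G0 by (intro add_nonneg_nonneg mult_nonneg_nonneg) auto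
    have "(\<Prod>j<k. ennreal ?c) = ennreal ?c ^ k" by (simp only: prod_constant card_lessThan)
    also have "\<dots> = ennreal (?c ^ k)" by (rule ennreal_power[OF c0])
    finally show ?thesis .
  qed
  also have "ennreal (exp (l * r\<^sup>2)) * ennreal (?c ^ k) = ennreal (exp (l * r\<^sup>2) * ?c ^ k)"
    using s G0 by (intro ennreal_mult[symmetric] zero_le_power add_nonneg_nonneg mult_nonneg_nonneg) auto
  finally have "measure (Pk k) ?A \<le> exp (l * r\<^sup>2) * ?c ^ k"
    using s G0 by (simp add: P.emeasure_eq_measure)
  then show ?thesis unfolding prior_ball_cdf cdf_Dk .
qed

lemma core:
  assumes a: "summable (\<lambda>j. (a j)\<^sup>2)" and K: "K > 0"
    and AS1: "\<And>A. A > 0 \<Longrightarrow> eventually (\<lambda>n::nat. A * sqrt (sqrt (ln (real n) / (16 * real n))) \<le> exp (- ln (real n) / 16)) sequentially"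
    and AS2: "\<And>A. A > 0 \<Longrightarrow> eventually (\<lambda>n::nat. sqrt (ln (real n) / real n) \<le> A) sequentially"
    and AS3: "\<And>A. A > 0 \<Longrightarrow> eventually (\<lambda>n::nat. 1 / real n \<le> A * sqrt (ln (real n) / real n)) sequentially"
  shows "\<exists>c C N. c > 0 \<and> C > 0 \<and> (\<forall>n\<ge>N. \<forall>k\<ge>1.
     c * (tail_sq a k + real k * ln (real n) / real n) \<le> (eps_n g a K n k)\<^sup>2 \<and>
     (eps_n g a K n k)\<^sup>2 \<le> C * (tail_sq a k + real k * ln (real n) / real n))"
proof -
  define Sig where "Sig = (\<Sum>j. (a j)\<^sup>2)"
  define B where "B = sqrt Sig"
  have aB: "\<bar>a j\<bar> \<le> B" for j
  proof -
    have "(\<Sum>i\<in>{j}. (a i)\<^sup>2) \<le> Sig" unfolding Sig_def by (intro sum_le_suminf a) auto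
    then have "(a j)\<^sup>2 \<le> Sig" by simp
    then show ?thesis unfolding B_def by (metis real_sqrt_abs real_sqrt_le_mono)
  qed
  have Tn: "tail_sq a k \<ge> 0" for k
  proof -
    have "summable (\<lambda>j. (a (j + k))\<^sup>2)" using summable_iff_shift[of "\<lambda>j. (a j)\<^sup>2" k] a by simp
    then show ?thesis unfolding tail_sq_def by (intro suminf_nonneg) auto
  qed
  have Icomp: "compact {-B-1..B+1}" and Ine: "{-B-1..B+1} \<noteq> {}"
    using aB[of 0] by auto
  have gc: "continuous_on {-B-1..B+1} g" using g_cont by (rule continuous_on_subset) auto
  obtain xG where "xG \<in> {-B-1..B+1}" "\<forall>y\<in>{-B-1..B+1}. g y \<le> g xG"
    using continuous_attains_sup[OF Icomp Ine gc] by blast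
  then obtain G where Gb: "\<And>y. y \<in> {-B-1..B+1} \<Longrightarrow> g y \<le> G" and G0: "G > 0"
    using g_pos by blast
  obtain xm where "xm \<in> {-B-1..B+1}" "\<forall>y\<in>{-B-1..B+1}. g xm \<le> g y"
    using continuous_attains_inf[OF Icomp Ine gc] by blast
  then obtain m where mb: "\<And>y. y \<in> {-B-1..B+1} \<Longrightarrow> m \<le> g y" and m0: "m > 0"
    using g_pos by blast
  have inI: "y \<in> {-B-1..B+1}" if "y \<in> {a j - s .. a j + s}" "s \<le> 1" for y j s
    using aB[of j] that by (auto simp: abs_le_iff)
  define C where "C = max 1 (1 / K\<^sup>2)"
  have C1: "C \<ge> 1" unfolding C_def by simp
  have "1 / K\<^sup>2 \<le> C" unfolding C_def by simp
  then have "K\<^sup>2 * (1 / K\<^sup>2) \<le> K\<^sup>2 * C" by (intro mult_left_mono) auto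
  then have KC: "K\<^sup>2 * C \<ge> 1" using K by simp
  define c where "c = min (1 / (2 * K\<^sup>2)) (1/32)"
  have c0: "c > 0" using K unfolding c_def by simp
  define A1 where "A1 = exp 1 * (2 * G + 1) * sqrt K"
  have A1: "A1 > 0" unfolding A1_def using G0 K by simp
  have ev: "eventually (\<lambda>n::nat. n \<ge> 3 \<and>
      A1 * sqrt (sqrt (ln (real n) / (16 * real n))) \<le> exp (- ln (real n) / 16) \<and>
      sqrt (ln (real n) / real n) \<le> 1 / (K * sqrt C) \<and>
      sqrt (ln (real n) / real n) \<le> 4 / K \<and>
      1 / real n \<le> (2 * m * K) * sqrt (ln (real n) / real n)) sequentially"
  proof -
    have e1: "eventually (\<lambda>n::nat. A1 * sqrt (sqrt (ln (real n) / (16 * real n))) \<le> exp (- ln (real n) / 16)) sequentially"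
      by (rule AS1[OF A1])
    have e2: "eventually (\<lambda>n::nat. sqrt (ln (real n) / real n) \<le> 1 / (K * sqrt C)) sequentially"
      using K C1 by (intro AS2) simp
    have e3: "eventually (\<lambda>n::nat. sqrt (ln (real n) / real n) \<le> 4 / K) sequentially"
      using K by (intro AS2) simp
    have e4: "eventually (\<lambda>n::nat. 1 / real n \<le> (2 * m * K) * sqrt (ln (real n) / real n)) sequentially"
      using K m0 by (intro AS3) simp
    have e5: "eventually (\<lambda>n::nat. n \<ge> 3) sequentially" by (rule eventually_ge_at_top)
    show ?thesis using e1 e2 e3 e4 e5 by eventually_elim blast
  qed
  then obtain N where N: "\<And>n. n \<ge> N \<Longrightarrow> n \<ge> 3 \<and>
      A1 * sqrt (sqrt (ln (real n) / (16 * real n))) \<le> exp (- ln (real n) / 16) \<and>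
      sqrt (ln (real n) / real n) \<le> 1 / (K * sqrt C) \<and>
      sqrt (ln (real n) / real n) \<le> 4 / K \<and>
      1 / real n \<le> (2 * m * K) * sqrt (ln (real n) / real n)"
    by (auto simp: eventually_sequentially)
  have main: "c * (tail_sq a k + real k * ln (real n) / real n) \<le> (eps_n g a K n k)\<^sup>2 \<and>
     (eps_n g a K n k)\<^sup>2 \<le> C * (tail_sq a k + real k * ln (real n) / real n)"
    if n: "n \<ge> N" and k: "k \<ge> 1" for n k
  proof -
    note Nn = N[OF n]
    have n3: "real n \<ge> 3" using Nn by simp
    have ln1: "ln (real n) \<ge> 1"
    proof -
      have "exp 1 \<le> (3::real)" using exp_le by simp
      also have "\<dots> \<le> real n" by (rule n3)
      finally show ?thesis using n3 by (simp add: ln_ge_iff)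
    qed
    define e where "e = eps_n g a K n k"
    define T where "T = tail_sq a k"
    have T0: "T \<ge> 0" unfolding T_def by (rule Tn)
    have ep: "e > 0 \<and> prior_ball g a k (K * e) = exp (- (real n * e\<^sup>2))"
      unfolding e_def using n3 k K Tn by (intro eps_prop) auto
    have lowT: "T \<le> K\<^sup>2 * e\<^sup>2"
    proof (rule ccontr)
      assume "\<not> ?thesis"
      then have emp: "{x \<in> space (Pk k). Sf a k x \<le> (K * e)\<^sup>2} = {}"
      proof -
        have sfT: "Sf a k x \<ge> T" for x unfolding Sf_def T_def by (simp add: sum_nonneg)
        have "T \<le> K\<^sup>2 * e\<^sup>2" if "Sf a k x \<le> (K * e)\<^sup>2" for x
          using sfT[of x] that by (simp add: power_mult_distrib)
        then show ?thesis using \<open>\<not> T \<le> K\<^sup>2 * e\<^sup>2\<close> by blast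
      qed
      have "prior_ball g a k (K * e) = 0" unfolding prior_ball_cdf cdf_Dk emp by simp
      then show False using ep by simp
    qed
    define rho where "rho = K * sqrt (ln (real n) / (16 * real n))"
    have rho0: "rho > 0" unfolding rho_def using K n3 ln1 by simp
    have sq16: "sqrt (ln (real n) / (16 * real n)) = sqrt (ln (real n) / real n) / 4"
      by (simp add: real_sqrt_divide real_sqrt_mult)
    have rho1: "rho \<le> 1" using Nn K unfolding rho_def sq16 by (simp add: field_simps)
    define e' where "e' = sqrt (real k * ln (real n) / (16 * real n))"
    have e'0: "e' > 0" unfolding e'_def using k n3 ln1 by simp
    have e'sq: "e'\<^sup>2 = real k * ln (real n) / (16 * real n)" unfolding e'_def using ln1 n3 by simp
    have lowk: "e' \<le> e"
    proof (rule ccontr)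
      assume "\<not> e' \<le> e"
      then have lt: "e < e'" by simp
      define r where "r = K * e'"
      have r2: "r\<^sup>2 = real k * rho\<^sup>2"
        unfolding r_def rho_def using e'sq ln1 n3 by (simp add: power_mult_distrib)
      have r0: "r > 0" unfolding r_def using K e'0 by simp
      define l where "l = real k / r\<^sup>2"
      have l0: "l > 0" unfolding l_def using k r0 by simp
      define s where "s = sqrt rho"
      have s0: "s \<ge> 0" and s1: "s \<le> 1" unfolding s_def using rho0 rho1 by auto
      have lr: "l * r\<^sup>2 = real k" unfolding l_def using r0 by simp
      have ls: "l * s\<^sup>2 = 1 / rho" unfolding l_def s_def r2 using rho0 k by (simp add: field_simps power2_eq_square)
      have "prior_ball g a k r \<le> exp (l * r\<^sup>2) * (2 * s * G + exp (- (l * s\<^sup>2))) ^ k"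
        using l0 s0 Tn by (intro chernoff) (auto intro!: Gb inI[OF _ s1])
      also have "\<dots> = (exp 1 * (2 * s * G + exp (- (1 / rho)))) ^ k"
        unfolding lr ls by (simp add: power_mult_distrib exp_of_nat_mult[symmetric])
      also have "\<dots> \<le> (exp (- ln (real n) / 16)) ^ k"
      proof (intro power_mono)
        have "exp (1 / rho) \<ge> 1 + 1 / rho" by (rule exp_ge_add_one_self)
        then have "exp (1 / rho) \<ge> 1 / rho" by linarith
        then have "exp (- (1 / rho)) \<le> rho" using rho0 by (simp add: exp_minus field_simps)
        also have "rho \<le> s"
        proof -
          have sr1: "sqrt rho \<le> 1" using rho1 by simp
          have "sqrt rho * sqrt rho \<le> sqrt rho * 1" using rho0 by (intro mult_left_mono[OF sr1]) simp
          then show ?thesis unfolding s_def using rho0 by simp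
        qed
        finally have "2 * s * G + exp (- (1 / rho)) \<le> (2 * G + 1) * s" by (simp add: algebra_simps)
        then have "exp 1 * (2 * s * G + exp (- (1 / rho))) \<le> exp 1 * ((2 * G + 1) * s)" by simp
        also have "\<dots> = A1 * sqrt (sqrt (ln (real n) / (16 * real n)))"
          unfolding A1_def s_def rho_def by (simp add: real_sqrt_mult)
        also have "\<dots> \<le> exp (- ln (real n) / 16)" using Nn by simp
        finally show "exp 1 * (2 * s * G + exp (- (1 / rho))) \<le> exp (- ln (real n) / 16)" .
        show "0 \<le> exp 1 * (2 * s * G + exp (- (1 / rho)))" using s0 G0 by simp
      qed
      also have "\<dots> = exp (- (real n * e'\<^sup>2))"
        unfolding e'sq using n3 by (simp add: exp_of_nat_mult[symmetric])
      finally have up: "prior_ball g a k (K * e') \<le> exp (- (real n * e'\<^sup>2))" unfolding r_def .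
      have "prior_ball g a k (K * e) \<le> prior_ball g a k (K * e')"
        using K ep lt by (intro pb_mono) auto
      moreover have "exp (- (real n * e'\<^sup>2)) < exp (- (real n * e\<^sup>2))"
        using lt ep n3 by (simp add: power_strict_mono)
      ultimately show False using up ep by simp
    qed
    have lowk2: "real k * ln (real n) / real n / 16 \<le> e\<^sup>2"
      using power_mono[OF lowk, of 2] e'sq e'0 by simp
    have low: "c * (T + real k * ln (real n) / real n) \<le> e\<^sup>2"
    proof -
      have "c * T \<le> (1 / (2 * K\<^sup>2)) * T" unfolding c_def using T0 by (intro mult_right_mono) auto
      also have "\<dots> \<le> e\<^sup>2 / 2" using lowT K by (simp add: field_simps)
      finally have 1: "c * T \<le> e\<^sup>2 / 2" .
      have kl0: "real k * ln (real n) / real n \<ge> 0" using ln1 by simp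
      have "c * (real k * ln (real n) / real n) \<le> (1/32) * (real k * ln (real n) / real n)"
        unfolding c_def using kl0 by (intro mult_right_mono) auto
      also have "\<dots> \<le> e\<^sup>2 / 2" using lowk2 by simp
      finally have 2: "c * (real k * ln (real n) / real n) \<le> e\<^sup>2 / 2" .
      show ?thesis unfolding distrib_left using 1 2 by linarith
    qed
    define e2 where "e2 = sqrt (C * (T + real k * ln (real n) / real n))"
    have kl: "real k * ln (real n) / real n > 0" using k ln1 n3 by simp
    have e2sq: "e2\<^sup>2 = C * (T + real k * ln (real n) / real n)"
      unfolding e2_def using C1 T0 kl by simp
    have e20: "e2 > 0" unfolding e2_def using C1 T0 kl by simp
    define d where "d = K * sqrt (C * ln (real n) / real n)"
    have d0: "d \<ge> 0" unfolding d_def using K C1 ln1 by simp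
    have dsq: "d\<^sup>2 = K\<^sup>2 * C * ln (real n) / real n"
      unfolding d_def using C1 ln1 n3 by (simp add: power_mult_distrib)
    have d1: "d \<le> 1"
    proof -
      have "d = K * sqrt C * sqrt (ln (real n) / real n)" unfolding d_def by (simp add: real_sqrt_mult real_sqrt_divide)
      also have "\<dots> \<le> K * sqrt C * (1 / (K * sqrt C))" using Nn K C1 by (intro mult_left_mono) auto
      also have "\<dots> = 1" using K C1 by simp
      finally show ?thesis .
    qed
    have dm: "1 / real n \<le> 2 * d * m"
    proof -
      have "1 / real n \<le> (2 * m * K) * sqrt (ln (real n) / real n)" using Nn by simp
      also have "\<dots> \<le> (2 * m * K) * sqrt (C * ln (real n) / real n)"
        using m0 K C1 ln1 n3 by (intro mult_left_mono real_sqrt_le_mono) (auto simp: field_simps)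
      also have "\<dots> = 2 * d * m" unfolding d_def by simp
      finally show ?thesis .
    qed
    have "(2 * d * m) ^ k \<le> prior_ball g a k (K * e2)"
    proof (intro box_lower)
      show "real k * d\<^sup>2 + tail_sq a k \<le> (K * e2)\<^sup>2"
      proof -
        have "T \<le> K\<^sup>2 * C * T" using KC T0 by (metis mult_le_cancel_right1 less_le_not_le)
        then show ?thesis unfolding dsq power_mult_distrib e2sq T_def[symmetric]
          by (simp add: algebra_simps)
      qed
    qed (use d0 m0 d1 in \<open>auto intro!: mb inI\<close>)
    moreover have "exp (- (real n * e2\<^sup>2)) \<le> (2 * d * m) ^ k"
    proof -
      have "real k * ln (real n) \<le> real n * e2\<^sup>2"
      proof -
        have "real k * ln (real n) \<le> C * (real k * ln (real n))" using mult_right_mono[OF C1, of "real k * ln (real n)"] ln1 by simp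
        also have "\<dots> \<le> real n * e2\<^sup>2" unfolding e2sq using n3 T0 C1 by (simp add: field_simps)
        finally show ?thesis .
      qed
      then have "exp (- (real n * e2\<^sup>2)) \<le> exp (- (real k * ln (real n)))" by simp
      also have "\<dots> = (1 / real n) ^ k"
      proof -
        have "exp (real k * ln (real n)) = exp (ln (real n)) ^ k" by (rule exp_of_nat_mult)
        also have "\<dots> = real n ^ k" using n3 by simp
        finally show ?thesis by (simp add: exp_minus power_one_over inverse_eq_divide)
      qed
      also have "\<dots> \<le> (2 * d * m) ^ k" using dm n3 by (intro power_mono) auto
      finally show ?thesis .
    qed
    ultimately have pb2: "exp (- (real n * e2\<^sup>2)) \<le> prior_ball g a k (K * e2)" by linarith
    have "e \<le> e2"
    proof (rule ccontr)
      assume "\<not> e \<le> e2"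
      then have lt: "e2 < e" by simp
      have "prior_ball g a k (K * e2) \<le> prior_ball g a k (K * e)" using K e20 lt by (intro pb_mono) auto
      moreover have "exp (- (real n * e\<^sup>2)) < exp (- (real n * e2\<^sup>2))"
        using lt e20 n3 by (simp add: power_strict_mono)
      ultimately show False using pb2 ep by simp
    qed
    then have "e\<^sup>2 \<le> e2\<^sup>2" using ep by (intro power_mono) auto
    then show ?thesis using low unfolding e2sq e_def T_def by simp
  qed
  show ?thesis using c0 C1 main by (intro exI[of _ c] exI[of _ C] exI[of _ N]) auto
qed

end

theorem lemma3p1:
  fixes g :: "real \<Rightarrow> real" and K :: real and m :: "nat \<Rightarrow> real"
  assumes g_cont: "continuous_on UNIV g"
    and g_pos: "\<And>x. g x > 0"
    and g_dens: "integrable lborel g" "integral\<^sup>L lborel g = 1"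
    and g_tail: "\<exists>s0 > 0. \<exists>p \<ge> 1. integrable lborel (\<lambda>x. exp (s0 * \<bar>x\<bar> powr p) * g x)"
    and K_pos: "K > 0"
    and m_inf: "filterlim m at_top sequentially"
    and m_slow: "\<And>\<delta>. \<delta> > 0 \<Longrightarrow> ((\<lambda>n. m n / real n powr \<delta>) \<longlongrightarrow> 0) sequentially"
  shows
    "(\<forall>th0 \<in> l2seq. \<exists>\<epsilon>0 > 0. \<forall>\<epsilon>. 0 < \<epsilon> \<and> \<epsilon> \<le> \<epsilon>0 \<longrightarrow>
        (\<exists>c C N. c > 0 \<and> C > 0 \<and> (\<forall>n \<ge> N. \<forall>k \<in> Lambda_n \<epsilon> n.
            c * (tail_sq th0 k + real k * ln (real n) / real n) \<le> (eps_n g th0 K n k)\<^sup>2 \<and>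
            (eps_n g th0 K n k)\<^sup>2 \<le> C * (tail_sq th0 k + real k * ln (real n) / real n)))
      \<and> (\<forall>\<beta> L. \<beta> > 0 \<and> L > 0 \<and> th0 \<in> H_inf \<beta> L \<union> S_cls \<beta> L \<longrightarrow>
          (\<exists>C N. C > 0 \<and> (\<forall>n \<ge> N.
            eps_n0_sq g th0 K m (Lambda_n \<epsilon> n) n
              \<le> ereal (C * ((real n / ln (real n)) powr (- \<beta> / (2 * \<beta> + 1)))\<^sup>2)))))
   \<and> (\<forall>\<beta> L. \<beta> > 0 \<and> L > 0 \<longrightarrow>
        (\<exists>th0 \<in> H_inf \<beta> L \<union> S_cls \<beta> L. \<exists>\<epsilon>0 > 0. \<forall>\<epsilon>. 0 < \<epsilon> \<and> \<epsilon> \<le> \<epsilon>0 \<longrightarrow>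
          (\<exists>c C N. c > 0 \<and> C > 0 \<and> (\<forall>n \<ge> N.
            ereal (c * ((real n / ln (real n)) powr (- \<beta> / (2 * \<beta> + 1)))\<^sup>2)
              \<le> eps_n0_sq g th0 K m (Lambda_n \<epsilon> n) n \<and>
            eps_n0_sq g th0 K m (Lambda_n \<epsilon> n) n
              \<le> ereal (C * ((real n / ln (real n)) powr (- \<beta> / (2 * \<beta> + 1)))\<^sup>2)))))"
proof -
  interpret gsetup g using g_cont g_pos g_dens by unfold_locales auto
  have coreX: "\<exists>c C N. c > 0 \<and> C > 0 \<and> (\<forall>n\<ge>N. \<forall>k\<ge>1.
     c * (tail_sq a k + real k * ln (real n) / real n) \<le> (eps_n g a K n k)\<^sup>2 \<and>
     (eps_n g a K n k)\<^sup>2 \<le> C * (tail_sq a k + real k * ln (real n) / real n))"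
    if "summable (\<lambda>j. (a j)\<^sup>2)" for a
    using core[OF that K_pos AS1 AS2 AS3] .
  have up: "\<exists>C N. C > 0 \<and> (\<forall>n\<ge>N. eps_n0_sq g a K m (Lambda_n \<epsilon> n) n
      \<le> ereal (C * ((real n / ln (real n)) powr (- \<beta> / (2 * \<beta> + 1)))\<^sup>2))"
    if s: "summable (\<lambda>j. (a j)\<^sup>2)" and e: "\<epsilon> > 0" and b: "\<beta> > 0" and L': "L' \<ge> 0"
      and Tb: "\<And>k. k \<ge> 1 \<Longrightarrow> tail_sq a k \<le> L' * real k powr (- (2 * \<beta>))" for a \<epsilon> \<beta> L'
  proof -
    obtain c C N where cCN: "c > 0" "C > 0" "\<forall>n\<ge>N. \<forall>k\<ge>1.
     c * (tail_sq a k + real k * ln (real n) / real n) \<le> (eps_n g a K n k)\<^sup>2 \<and>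
     (eps_n g a K n k)\<^sup>2 \<le> C * (tail_sq a k + real k * ln (real n) / real n)"
      using coreX[OF s] by blast
    show ?thesis unfolding eps_n0_sq_def
      by (rule upper_gen[where E="\<lambda>n k. (eps_n g a K n k)\<^sup>2" and T="tail_sq a" and c=c and C=C and N=N])
        (use cCN Tb tail_nonneg[OF s] L' b e m_slow q_inf ln_sqrt in auto)
  qed
  have PA: "\<forall>th0 \<in> l2seq. \<exists>\<epsilon>0 > 0. \<forall>\<epsilon>. 0 < \<epsilon> \<and> \<epsilon> \<le> \<epsilon>0 \<longrightarrow>
        (\<exists>c C N. c > 0 \<and> C > 0 \<and> (\<forall>n \<ge> N. \<forall>k \<in> Lambda_n \<epsilon> n.
            c * (tail_sq th0 k + real k * ln (real n) / real n) \<le> (eps_n g th0 K n k)\<^sup>2 \<and>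
            (eps_n g th0 K n k)\<^sup>2 \<le> C * (tail_sq th0 k + real k * ln (real n) / real n)))
      \<and> (\<forall>\<beta> L. \<beta> > 0 \<and> L > 0 \<and> th0 \<in> H_inf \<beta> L \<union> S_cls \<beta> L \<longrightarrow>
          (\<exists>C N. C > 0 \<and> (\<forall>n \<ge> N.
            eps_n0_sq g th0 K m (Lambda_n \<epsilon> n) n
              \<le> ereal (C * ((real n / ln (real n)) powr (- \<beta> / (2 * \<beta> + 1)))\<^sup>2))))"
  proof (intro ballI)
    fix th0 assume th0: "th0 \<in> l2seq"
    then have s: "summable (\<lambda>j. (th0 j)\<^sup>2)" unfolding l2seq_def by simp
    obtain c C N where cCN: "c > 0" "C > 0" "\<forall>n\<ge>N. \<forall>k\<ge>1.
     c * (tail_sq th0 k + real k * ln (real n) / real n) \<le> (eps_n g th0 K n k)\<^sup>2 \<and>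
     (eps_n g th0 K n k)\<^sup>2 \<le> C * (tail_sq th0 k + real k * ln (real n) / real n)"
      using coreX[OF s] by blast
    show "\<exists>\<epsilon>0 > 0. \<forall>\<epsilon>. 0 < \<epsilon> \<and> \<epsilon> \<le> \<epsilon>0 \<longrightarrow>
        (\<exists>c C N. c > 0 \<and> C > 0 \<and> (\<forall>n \<ge> N. \<forall>k \<in> Lambda_n \<epsilon> n.
            c * (tail_sq th0 k + real k * ln (real n) / real n) \<le> (eps_n g th0 K n k)\<^sup>2 \<and>
            (eps_n g th0 K n k)\<^sup>2 \<le> C * (tail_sq th0 k + real k * ln (real n) / real n)))
      \<and> (\<forall>\<beta> L. \<beta> > 0 \<and> L > 0 \<and> th0 \<in> H_inf \<beta> L \<union> S_cls \<beta> L \<longrightarrow>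
          (\<exists>C N. C > 0 \<and> (\<forall>n \<ge> N.
            eps_n0_sq g th0 K m (Lambda_n \<epsilon> n) n
              \<le> ereal (C * ((real n / ln (real n)) powr (- \<beta> / (2 * \<beta> + 1)))\<^sup>2))))"
    proof (rule exI[of _ "1::real"], intro conjI allI impI)
      show "(1::real) > 0" by simp
      fix \<epsilon> :: real assume e: "0 < \<epsilon> \<and> \<epsilon> \<le> 1"
      show "\<exists>c C N. c > 0 \<and> C > 0 \<and> (\<forall>n \<ge> N. \<forall>k \<in> Lambda_n \<epsilon> n.
            c * (tail_sq th0 k + real k * ln (real n) / real n) \<le> (eps_n g th0 K n k)\<^sup>2 \<and>
            (eps_n g th0 K n k)\<^sup>2 \<le> C * (tail_sq th0 k + real k * ln (real n) / real n))"
      proof -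
        have "\<forall>n \<ge> N. \<forall>k \<in> Lambda_n \<epsilon> n.
            c * (tail_sq th0 k + real k * ln (real n) / real n) \<le> (eps_n g th0 K n k)\<^sup>2 \<and>
            (eps_n g th0 K n k)\<^sup>2 \<le> C * (tail_sq th0 k + real k * ln (real n) / real n)"
        proof (intro allI impI ballI)
          fix n k assume n: "N \<le> n" and k: "k \<in> Lambda_n \<epsilon> n"
          have k1: "k \<ge> 1" using k unfolding Lambda_n_def by simp
          show "c * (tail_sq th0 k + real k * ln (real n) / real n) \<le> (eps_n g th0 K n k)\<^sup>2 \<and>
            (eps_n g th0 K n k)\<^sup>2 \<le> C * (tail_sq th0 k + real k * ln (real n) / real n)"
            using cCN(3) n k1 by blast
        qed
        then show ?thesis using cCN(1,2) by blast
      qed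
      fix \<beta> L :: real assume h: "\<beta> > 0 \<and> L > 0 \<and> th0 \<in> H_inf \<beta> L \<union> S_cls \<beta> L"
      obtain L' where L'0: "L' \<ge> 0" and Tb: "\<And>k. k \<ge> 1 \<Longrightarrow> tail_sq th0 k \<le> L' * real k powr (- (2 * \<beta>))"
      proof (cases "th0 \<in> H_inf \<beta> L")
        case True
        have "tail_sq th0 k \<le> L / (2 * \<beta>) * real k powr (- (2 * \<beta>))" if "k \<ge> 1" for k
          using True h s that unfolding H_inf_def by (intro tail_H) auto
        moreover have "L / (2 * \<beta>) \<ge> 0" using h by simp
        ultimately show ?thesis using that by blast
      next
        case False
        then have S: "th0 \<in> S_cls \<beta> L" using h by blast
        have "tail_sq th0 k \<le> L * real k powr (- (2 * \<beta>))" if "k \<ge> 1" for k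
          using S h s that unfolding S_cls_def by (intro tail_S) auto
        moreover have "L \<ge> 0" using h by simp
        ultimately show ?thesis using that by blast
      qed
      show "\<exists>C N. C > 0 \<and> (\<forall>n \<ge> N. eps_n0_sq g th0 K m (Lambda_n \<epsilon> n) n
              \<le> ereal (C * ((real n / ln (real n)) powr (- \<beta> / (2 * \<beta> + 1)))\<^sup>2))"
        using up[OF s _ _ L'0 Tb] e h by blast
    qed
  qed
  have PB: "\<forall>\<beta> L. \<beta> > 0 \<and> L > 0 \<longrightarrow>
        (\<exists>th0 \<in> H_inf \<beta> L \<union> S_cls \<beta> L. \<exists>\<epsilon>0 > 0. \<forall>\<epsilon>. 0 < \<epsilon> \<and> \<epsilon> \<le> \<epsilon>0 \<longrightarrow>
          (\<exists>c C N. c > 0 \<and> C > 0 \<and> (\<forall>n \<ge> N.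
            ereal (c * ((real n / ln (real n)) powr (- \<beta> / (2 * \<beta> + 1)))\<^sup>2)
              \<le> eps_n0_sq g th0 K m (Lambda_n \<epsilon> n) n \<and>
            eps_n0_sq g th0 K m (Lambda_n \<epsilon> n) n
              \<le> ereal (C * ((real n / ln (real n)) powr (- \<beta> / (2 * \<beta> + 1)))\<^sup>2))))"
  proof (intro allI impI)
    fix \<beta> L :: real assume h: "\<beta> > 0 \<and> L > 0"
    then have b: "\<beta> > 0" and L: "L > 0" by auto
    let ?th = "thP \<beta> L"
    have s: "summable (\<lambda>j. (?th j)\<^sup>2)" using thP_summable[OF b L] .
    have hH: "?th \<in> H_inf \<beta> L" using thP_H[OF L] .
    obtain c C N where cCN: "c > 0" "C > 0" "\<forall>n\<ge>N. \<forall>k\<ge>1.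
     c * (tail_sq ?th k + real k * ln (real n) / real n) \<le> (eps_n g ?th K n k)\<^sup>2 \<and>
     (eps_n g ?th K n k)\<^sup>2 \<le> C * (tail_sq ?th k + real k * ln (real n) / real n)"
      using coreX[OF s] by blast
    have Tb: "tail_sq ?th k \<le> L / (2 * \<beta>) * real k powr (- (2 * \<beta>))" if "k \<ge> 1" for k
      using hH b s that unfolding H_inf_def by (intro tail_H) auto
    have L'0: "L / (2 * \<beta>) \<ge> 0" using b L by simp
    have Lt: "L * 2 powr (- (2 * \<beta> + 1)) > 0" using L by simp
    show "\<exists>th0 \<in> H_inf \<beta> L \<union> S_cls \<beta> L. \<exists>\<epsilon>0 > 0. \<forall>\<epsilon>. 0 < \<epsilon> \<and> \<epsilon> \<le> \<epsilon>0 \<longrightarrow>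
          (\<exists>c C N. c > 0 \<and> C > 0 \<and> (\<forall>n \<ge> N.
            ereal (c * ((real n / ln (real n)) powr (- \<beta> / (2 * \<beta> + 1)))\<^sup>2)
              \<le> eps_n0_sq g th0 K m (Lambda_n \<epsilon> n) n \<and>
            eps_n0_sq g th0 K m (Lambda_n \<epsilon> n) n
              \<le> ereal (C * ((real n / ln (real n)) powr (- \<beta> / (2 * \<beta> + 1)))\<^sup>2)))"
    proof (rule bexI[of _ ?th], rule exI[of _ "1::real"], intro conjI allI impI)
      show "?th \<in> H_inf \<beta> L \<union> S_cls \<beta> L" using hH by blast
      show "(1::real) > 0" by simp
      fix \<epsilon> :: real assume e: "0 < \<epsilon> \<and> \<epsilon> \<le> 1"
      obtain C3 N3 where CN3: "C3 > 0" "\<forall>n\<ge>N3. eps_n0_sq g ?th K m (Lambda_n \<epsilon> n) n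
          \<le> ereal (C3 * ((real n / ln (real n)) powr (- \<beta> / (2 * \<beta> + 1)))\<^sup>2)"
        using up[OF s _ b L'0 Tb] e by blast
      have lg: "\<exists>c2 N2. c2 > 0 \<and> (\<forall>n \<ge> N2. ereal (c2 * ((real n / ln (real n)) powr (- \<beta> / (2 * \<beta> + 1)))\<^sup>2) \<le>
          eps_n0_sq g ?th K m (Lambda_n \<epsilon> n) n)"
        unfolding eps_n0_sq_def
        by (rule lower_gen[where E="\<lambda>n k. (eps_n g ?th K n k)\<^sup>2" and T="tail_sq ?th" and c=c and N=N
              and Lt="L * 2 powr (- (2 * \<beta> + 1))"])
          (use cCN thP_tail_lower[OF b L] Lt b in auto)
      then obtain c2 N2 where CN2: "c2 > 0" "\<forall>n\<ge>N2. ereal (c2 * ((real n / ln (real n)) powr (- \<beta> / (2 * \<beta> + 1)))\<^sup>2) \<le>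
          eps_n0_sq g ?th K m (Lambda_n \<epsilon> n) n" by blast
      show "\<exists>c C N. c > 0 \<and> C > 0 \<and> (\<forall>n \<ge> N.
            ereal (c * ((real n / ln (real n)) powr (- \<beta> / (2 * \<beta> + 1)))\<^sup>2)
              \<le> eps_n0_sq g ?th K m (Lambda_n \<epsilon> n) n \<and>
            eps_n0_sq g ?th K m (Lambda_n \<epsilon> n) n
              \<le> ereal (C * ((real n / ln (real n)) powr (- \<beta> / (2 * \<beta> + 1)))\<^sup>2))"
        using CN2 CN3 by (intro exI[of _ c2] exI[of _ C3] exI[of _ "max N2 N3"]) auto
    qed
  qed
  show ?thesis using PA PB by blast
qed

end
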